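(* Let $n\ge 2$, $R=\mathbb{Q}[q^{\pm1},t^{\pm1}]$, and let $\widehat{C}^*=\widehat{C}^*(\widetilde{B}_n)$ be the augmented Salvetti complex with coefficients in $R_{q,t}$, and $\widehat{I}\subset\widehat{C}^*$ the subcomplex of $\sigma$-invariant elements. Let $C^*(B_n)$ be the Salvetti complex of the Artin group of type $B_n$ with coefficients in $R$, where $B_n$ has vertices $1,\dots,n$ (path $1-2-\dots-n$, edge $\{n-1,n\}$ labelled $4$, others $3$), vertices $1,\dots,n-1$ act by $-q$ and vertex $n$ by $-t$. Define $\beta:C^*(B_n)\to\widehat{C}^*$ on basis elements by: for $\Gamma\subset\{1,\dots,n\}$ let $\Gamma^+=\{j+1: j\in\Gamma, j\ge2\}\subset\{3,\dots,n+1\}$; if $1\notin\Gamma$ then $\beta(e_\Gamma)=e_{\Gamma^+}$, and if $1\in\Gamma$ then $\beta(e_\Gamma)=e_{\Gamma^+\cup\{1\}}+e_{\Gamma^+\cup\{2\}}$. Then $\beta$ is an isomorphism of cochain complexes from $C^*(B_n)$ onto $\widehat{I}$.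
   Context: Salvetti complex: for a Coxeter system $(W,S)$ with $S$ linearly ordered, an abelian representation $\eta$ of the Artin group into units of a ring $R$, and an $R$-module $M$, the cochain complex $C^*(W;M)$ has $C^k=\bigoplus_{\Gamma\subset S,\ |\Gamma|=k,\ |W_\Gamma|<\infty} M\,e_\Gamma$ and differential $d(e_\Gamma)=\sum (-1)^{\alpha(\Gamma,\Gamma')}\frac{W_{\Gamma'}(\eta)}{W_\Gamma(\eta)}e_{\Gamma'}$, the sum over $\Gamma'=\Gamma\cup\{s'\}\supsetneq\Gamma$ with $W_{\Gamma'}$ finite, $\alpha(\Gamma,\Gamma')=|\{s\in\Gamma: s<s'\}|$, and $W_\Gamma(\eta)=\sum_{w\in W_\Gamma}(-1)^{\ell(w)}\eta(\psi(w))$ ($\psi$ the canonical section $W\to$ Artin group). When generator $s$ acts by $-q$ (resp. $-t$), $W_\Gamma(\eta)=\sum_{w\in W_\Gamma}q^{a(w)}t^{b(w)}$ with $a(w)$, $b(w)$ the numbers of $q$-type and $t$-type letters in a reduced word. Type $\widetilde{B}_n$: vertices $S=\{1,\dots,n+1\}$, $1$ and $2$ joined to $3$, $i$ joined to $i+1$ for $3\le i\le n$, all labels $3$ except $\{n,n+1\}$ with label $4$; $R_{q,t}$ is $R$ with generators $1,\dots,n$ acting by $-q$ and $n+1$ by $-t$. Proper subsets of $S$ are exactly those with finite parabolic subgroup. The augmented complex is $\widehat{C}^*=C^*(\widetilde{B}_n;R_{q,t})\oplus R\,e_S$, with $d(e_\Gamma)$ for $|\Gamma|=n$ additionally containing the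 term $(-1)^{\alpha(\Gamma,S)}\frac{\widehat{W}(q,t)}{W_\Gamma(q,t)}e_S$, where $\widehat{W}(q,t)=[2(n-1)]_q!!\,[n]_q\prod_{i=0}^{n-1}(1+tq^i)$, $[m]_q=1+\dots+q^{m-1}$, $[2k]_q!!=\prod_{i=1}^k[2i]_q$. The involution $\sigma$ of $\widehat{C}^*$ is: $\sigma(e_\Gamma)=e_\Gamma$ if $1,2\notin\Gamma$; $\sigma(e_\Gamma)=-e_\Gamma$ if $1,2\in\Gamma$ (including $\Gamma=S$); and if $\Gamma$ contains exactly one of $1,2$, $\sigma(e_\Gamma)=e_{\Gamma'}$ where $\Gamma'$ is obtained by exchanging $1$ and $2$. *)

theory Defs
  imports Complex_Main "HOL-Library.Poly_Mapping" "HOL-Library.Product_Plus"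
begin

text \<open>A Coxeter matrix on a generator set S of naturals: m s t is the label of the
  pair {s,t} (2 for non-adjacent vertices). All labels occurring here are finite.
  Elements of W are equivalence classes of words over S modulo the congruence
  generated by the relators s s and (s t)^(m s t).\<close>

type_synonym coxmat = "nat \<Rightarrow> nat \<Rightarrow> nat"

inductive cox_rel :: "nat set \<Rightarrow> coxmat \<Rightarrow> nat list \<Rightarrow> nat list \<Rightarrow> bool"
  for S :: "nat set" and m :: coxmat where
  refl: "set w \<subseteq> S \<Longrightarrow> cox_rel S m w w"
| sym: "cox_rel S m v w \<Longrightarrow> cox_rel S m w v"
| trans: "cox_rel S m u v \<Longrightarrow> cox_rel S m v w \<Longrightarrow> cox_rel S m u w"
| invol: "s \<in> S \<Longrightarrow> set u \<subseteq> S \<Longrightarrow> set v \<subseteq> S \<Longrightarrow>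
           cox_rel S m (u @ [s, s] @ v) (u @ v)"
| braid: "s \<in> S \<Longrightarrow> t \<in> S \<Longrightarrow> s \<noteq> t \<Longrightarrow> set u \<subseteq> S \<Longrightarrow> set v \<subseteq> S \<Longrightarrow>
           cox_rel S m (u @ concat (replicate (m s t) [s, t]) @ v) (u @ v)"

definition cox_class :: "nat set \<Rightarrow> coxmat \<Rightarrow> nat list \<Rightarrow> nat list set" where
  "cox_class S m w = {v. cox_rel S m w v}"

definition parabolic :: "nat set \<Rightarrow> coxmat \<Rightarrow> nat set \<Rightarrow> nat list set set" where
  "parabolic S m \<Gamma> = {cox_class S m w | w. set w \<subseteq> \<Gamma>}"

definition cox_length :: "nat list set \<Rightarrow> nat" where
  "cox_length C = (LEAST k. \<exists>w\<in>C. length w = k)"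

definition reduced_word :: "nat list set \<Rightarrow> nat list" where
  "reduced_word C = (SOME w. w \<in> C \<and> length w = cox_length C)"

text \<open>W_Gamma(eta) = sum over w in W_Gamma of (-1)^l(w) eta(psi(w)), with eta abelian,
  so eta(psi(w)) is the product of eta over a reduced word of w.\<close>
definition poincare :: "nat set \<Rightarrow> coxmat \<Rightarrow> (nat \<Rightarrow> 'r::comm_ring_1) \<Rightarrow> nat set \<Rightarrow> 'r" where
  "poincare S m \<eta> \<Gamma> = (\<Sum>C\<in>parabolic S m \<Gamma>.
      (-1) ^ cox_length C * prod_list (map \<eta> (reduced_word C)))"

definition fin_type :: "nat set \<Rightarrow> coxmat \<Rightarrow> nat set \<Rightarrow> bool" where
  "fin_type S m \<Gamma> \<longleftrightarrow> \<Gamma> \<subseteq> S \<and> finite (parabolic S m \<Gamma>)"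

text \<open>Cochains: functions from subsets Gamma to R (coefficient of e_Gamma).\<close>

definition alpha :: "nat set \<Rightarrow> nat \<Rightarrow> nat" where
  "alpha \<Gamma> s' = card {s\<in>\<Gamma>. s < s'}"

text \<open>Exact quotient a/b in the ring (unique in a domain when it exists).\<close>
definition rdiv :: "'r::comm_ring_1 \<Rightarrow> 'r \<Rightarrow> 'r" where
  "rdiv a b = (THE c. b * c = a)"

definition salvetti_coef ::
  "nat set \<Rightarrow> coxmat \<Rightarrow> (nat \<Rightarrow> 'r::comm_ring_1) \<Rightarrow> nat set \<Rightarrow> nat set \<Rightarrow> 'r" where
  "salvetti_coef S m \<eta> \<Gamma> \<Gamma>' =
     (if fin_type S m \<Gamma> \<and> fin_type S m \<Gamma>' \<and> \<Gamma> \<subseteq> \<Gamma>' \<and> card (\<Gamma>' - \<Gamma>) = 1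
      then (-1) ^ alpha \<Gamma> (the_elem (\<Gamma>' - \<Gamma>)) *
           rdiv (poincare S m \<eta> \<Gamma>') (poincare S m \<eta> \<Gamma>)
      else 0)"

definition salvetti_d ::
  "nat set \<Rightarrow> coxmat \<Rightarrow> (nat \<Rightarrow> 'r::comm_ring_1) \<Rightarrow> (nat set \<Rightarrow> 'r) \<Rightarrow> (nat set \<Rightarrow> 'r)" where
  "salvetti_d S m \<eta> x = (\<lambda>\<Gamma>'. \<Sum>\<Gamma>\<in>{\<Gamma>. fin_type S m \<Gamma>}. x \<Gamma> * salvetti_coef S m \<eta> \<Gamma> \<Gamma>')"

definition cochains :: "nat set \<Rightarrow> coxmat \<Rightarrow> (nat set \<Rightarrow> 'r::comm_ring_1) set" where
  "cochains S m = {x. \<forall>\<Gamma>. \<not> fin_type S m \<Gamma> \<longrightarrow> x \<Gamma> = 0}"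

section \<open>The ring R = Q[q^{+-1}, t^{+-1}] as the group algebra Q[Z^2]\<close>

type_synonym R = "int \<times> int \<Rightarrow>\<^sub>0 rat"

definition qv :: R where "qv = Poly_Mapping.single (1, 0) 1"
definition tv :: R where "tv = Poly_Mapping.single (0, 1) 1"

definition adjacent :: "nat \<Rightarrow> nat \<Rightarrow> bool" where
  "adjacent i j \<longleftrightarrow> i + 1 = j \<or> j + 1 = i"

definition B_mat :: "nat \<Rightarrow> coxmat" where
  "B_mat n i j = (if {i, j} = {n - 1, n} then 4 else if adjacent i j then 3 else 2)"

text \<open>Affine B_n on {1..n+1}: 1 and 2 joined to 3, i joined to i+1 for 3 <= i <= n,
  edge {n,n+1} labelled 4. For n = 2 the vertex n+1 = 3 is joined to both 1 and 2, and
  both edges get label 4 (so that sigma is a diagram automorphism).\<close>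
definition Bt_edge :: "nat \<Rightarrow> nat \<Rightarrow> nat \<Rightarrow> bool" where
  "Bt_edge n i j \<longleftrightarrow> {i, j} = {1, 3} \<or> {i, j} = {2, 3} \<or>
     (\<exists>k. 3 \<le> k \<and> k \<le> n \<and> {i, j} = {k, k + 1})"

definition Bt_mat :: "nat \<Rightarrow> coxmat" where
  "Bt_mat n i j = (if Bt_edge n i j \<and> (n + 1 = i \<or> n + 1 = j) then 4
                   else if Bt_edge n i j then 3 else 2)"

definition eta_B :: "nat \<Rightarrow> nat \<Rightarrow> R" where
  "eta_B n s = (if s = n then - tv else - qv)"

definition eta_Bt :: "nat \<Rightarrow> nat \<Rightarrow> R" where
  "eta_Bt n s = (if s = n + 1 then - tv else - qv)"

definition qint :: "nat \<Rightarrow> R" where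
  "qint k = (\<Sum>i<k. qv ^ i)"

definition qdfact :: "nat \<Rightarrow> R" where
  "qdfact k = (\<Prod>i\<in>{1..k}. qint (2 * i))"

definition What :: "nat \<Rightarrow> R" where
  "What n = qdfact (n - 1) * qint n * (\<Prod>i<n. 1 + tv * qv ^ i)"

abbreviation St :: "nat \<Rightarrow> nat set" where "St n \<equiv> {1..n+1}"

definition chat :: "nat \<Rightarrow> (nat set \<Rightarrow> R) set" where
  "chat n = {x. \<forall>\<Gamma>. \<not> \<Gamma> \<subseteq> St n \<longrightarrow> x \<Gamma> = 0}"

definition dhat :: "nat \<Rightarrow> (nat set \<Rightarrow> R) \<Rightarrow> (nat set \<Rightarrow> R)" where
  "dhat n x = (\<lambda>\<Gamma>'. salvetti_d (St n) (Bt_mat n) (eta_Bt n) x \<Gamma>' +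
     (if \<Gamma>' = St n then
        (\<Sum>\<Gamma>\<in>{\<Gamma>. \<Gamma> \<subseteq> St n \<and> card \<Gamma> = n}.
           x \<Gamma> * ((-1) ^ alpha \<Gamma> (the_elem (St n - \<Gamma>)) *
                   rdiv (What n) (poincare (St n) (Bt_mat n) (eta_Bt n) \<Gamma>)))
      else 0))"

definition ind :: "nat set \<Rightarrow> nat set \<Rightarrow> R" where
  "ind A \<Delta> = (if \<Delta> = A then 1 else 0)"

definition swap12 :: "nat set \<Rightarrow> nat set" where
  "swap12 \<Gamma> = (\<lambda>i. if i = 1 then 2 else if i = 2 then 1 else i) ` \<Gamma>"

definition sigma_e :: "nat set \<Rightarrow> nat set \<Rightarrow> R" where
  "sigma_e \<Gamma> = (if 1 \<notin> \<Gamma> \<and> 2 \<notin> \<Gamma> then ind \<Gamma>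
                 else if 1 \<in> \<Gamma> \<and> 2 \<in> \<Gamma> then - ind \<Gamma>
                 else ind (swap12 \<Gamma>))"

definition sigma :: "nat \<Rightarrow> (nat set \<Rightarrow> R) \<Rightarrow> (nat set \<Rightarrow> R)" where
  "sigma n x = (\<lambda>\<Delta>. \<Sum>\<Gamma>\<in>Pow (St n). x \<Gamma> * sigma_e \<Gamma> \<Delta>)"

definition Ihat :: "nat \<Rightarrow> (nat set \<Rightarrow> R) set" where
  "Ihat n = {x \<in> chat n. sigma n x = x}"

definition shift_plus :: "nat set \<Rightarrow> nat set" where
  "shift_plus \<Gamma> = (\<lambda>j. j + 1) ` {j \<in> \<Gamma>. 2 \<le> j}"

definition beta_e :: "nat set \<Rightarrow> nat set \<Rightarrow> R" where
  "beta_e \<Gamma> = (if 1 \<notin> \<Gamma> then ind (shift_plus \<Gamma>)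
                else (\<lambda>\<Delta>. ind (insert 1 (shift_plus \<Gamma>)) \<Delta> + ind (insert 2 (shift_plus \<Gamma>)) \<Delta>))"

definition beta :: "nat \<Rightarrow> (nat set \<Rightarrow> R) \<Rightarrow> (nat set \<Rightarrow> R)" where
  "beta n x = (\<lambda>\<Delta>. \<Sum>\<Gamma>\<in>Pow {1..n}. x \<Gamma> * beta_e \<Gamma> \<Delta>)"

end

theory Submission
  imports Defs
begin


declare cox_rel.trans[trans]

lemma set_concat_rep: "set (concat (replicate k [s,t])) \<subseteq> {s,t}"
  by (induction k) auto

lemma cox_rel_set: "cox_rel S m u v \<Longrightarrow> set u \<subseteq> S \<and> set v \<subseteq> S"
proof (induction rule: cox_rel.induct)
  case (braid s t u v) then show ?case using set_concat_rep[of "m s t" s t] by auto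
qed auto

lemma cox_rel_app_left: "cox_rel S m u v \<Longrightarrow> set w \<subseteq> S \<Longrightarrow> cox_rel S m (w@u) (w@v)"
proof (induction rule: cox_rel.induct)
  case (refl w') then show ?case by (intro cox_rel.refl) auto
next
  case (sym v w') then show ?case by (blast intro: cox_rel.sym)
next
  case (trans u v w') then show ?case by (blast intro: cox_rel.trans)
next
  case (invol s u v) then show ?case using cox_rel.invol[of s S "w@u" v m] by simp
next
  case (braid s t u v) then show ?case using cox_rel.braid[of s S t "w@u" v m] by simp
qed

lemma cox_rel_app_right: "cox_rel S m u v \<Longrightarrow> set w \<subseteq> S \<Longrightarrow> cox_rel S m (u@w) (v@w)"
proof (induction rule: cox_rel.induct)
  case (refl w') then show ?case by (intro cox_rel.refl) auto
next
  case (sym v w') then show ?case by (blast intro: cox_rel.sym)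
next
  case (trans u v w') then show ?case by (blast intro: cox_rel.trans)
next
  case (invol s u v) then show ?case using cox_rel.invol[of s S u "v@w" m] by simp
next
  case (braid s t u v) then show ?case using cox_rel.braid[of s S t u "v@w" m] by simp
qed

lemma cox_rel_cong: "cox_rel S m u u' \<Longrightarrow> cox_rel S m v v' \<Longrightarrow> cox_rel S m (u@v) (u'@v')"
proof -
  assume a: "cox_rel S m u u'" and b: "cox_rel S m v v'"
  have "cox_rel S m (u@v) (u'@v)" using cox_rel_app_right[OF a] cox_rel_set[OF b] by simp
  also have "cox_rel S m (u'@v) (u'@v')" using cox_rel_app_left[OF b] cox_rel_set[OF a] by simp
  finally show ?thesis .
qed

lemma cox_rel_ss: "s \<in> S \<Longrightarrow> cox_rel S m [s,s] []"
  using cox_rel.invol[of s S "[]" "[]" m] by simp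

lemma cox_rel_inv: "set w \<subseteq> S \<Longrightarrow> cox_rel S m (w @ rev w) []"
proof (induction w)
  case Nil then show ?case by (simp add: cox_rel.refl)
next
  case (Cons a w)
  have "cox_rel S m ([a] @ (w @ rev w) @ [a]) ([a] @ [] @ [a])"
    using Cons by (intro cox_rel_cong cox_rel.refl) auto
  also have "cox_rel S m ([a] @ [] @ [a]) []" using Cons cox_rel_ss[of a S m] by simp
  finally show ?case by simp
qed

lemma cox_rel_inv': "set w \<subseteq> S \<Longrightarrow> cox_rel S m (rev w @ w) []"
  using cox_rel_inv[of "rev w" S m] by simp

lemma cox_rel_cancel_left: "set c \<subseteq> S \<Longrightarrow> cox_rel S m (c@x) (c@y) \<Longrightarrow> cox_rel S m x y"
proof -
  assume c: "set c \<subseteq> S" and r: "cox_rel S m (c@x) (c@y)"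
  have x: "set x \<subseteq> S" and y: "set y \<subseteq> S" using cox_rel_set[OF r] by auto
  have "cox_rel S m x ((rev c @ c) @ x)"
    using cox_rel_app_right[OF cox_rel_inv'[OF c] x] by (simp add: cox_rel.sym)
  also have "cox_rel S m ((rev c @ c) @ x) ((rev c @ c) @ y)"
    using cox_rel_app_left[OF r, of "rev c"] c by simp
  also have "cox_rel S m ((rev c @ c) @ y) y"
    using cox_rel_app_right[OF cox_rel_inv'[OF c] y] by simp
  finally show ?thesis .
qed

lemma cox_rel_move_right: "cox_rel S m x (y@z) \<Longrightarrow> cox_rel S m (x @ rev z) y"
proof -
  assume r: "cox_rel S m x (y@z)"
  have z: "set z \<subseteq> S" and y: "set y \<subseteq> S" using cox_rel_set[OF r] by auto
  have "cox_rel S m (x @ rev z) (y @ (z @ rev z))"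
    using cox_rel_app_right[OF r, of "rev z"] z by simp
  also have "cox_rel S m (y @ (z @ rev z)) (y @ [])"
    using cox_rel_app_left[OF cox_rel_inv[OF z] y] .
  finally show ?thesis by simp
qed

lemma cox_rel_cancel_right: "set c \<subseteq> S \<Longrightarrow> cox_rel S m (x@c) (y@c) \<Longrightarrow> cox_rel S m x y"
proof -
  assume c: "set c \<subseteq> S" and r: "cox_rel S m (x@c) (y@c)"
  have "cox_rel S m (x @ (c @ rev c)) (x @ [])"
    using cox_rel_app_left[OF cox_rel_inv[OF c]] cox_rel_set[OF r] by auto
  then have "cox_rel S m x ((x@c) @ rev c)" by (simp add: cox_rel.sym)
  also have "cox_rel S m ((x@c) @ rev c) y" by (rule cox_rel_move_right) (use r in simp)
  finally show ?thesis .
qed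

lemma cox_rel_rev: "cox_rel S m u v \<Longrightarrow> cox_rel S m (rev u) (rev v)"
proof -
  assume r: "cox_rel S m u v"
  have u: "set u \<subseteq> S" and v: "set v \<subseteq> S" using cox_rel_set[OF r] by auto
  have "cox_rel S m (rev u @ v) (rev u @ u)" using cox_rel_app_left[OF cox_rel.sym[OF r]] u by simp
  also have "cox_rel S m (rev u @ u) []" using cox_rel_inv'[OF u] .
  finally have a: "cox_rel S m (rev u @ v) []" .
  have "cox_rel S m (rev u) (rev u @ (v @ rev v))"
    using cox_rel_app_left[OF cox_rel_inv[OF v], of "rev u"] u by (simp add: cox_rel.sym)
  also have "cox_rel S m (rev u @ v @ rev v) ([] @ rev v)"
    using cox_rel_app_right[OF a] v by simp
  finally show ?thesis by simp
qed

lemma cox_class_eq: "cox_rel S m u v \<Longrightarrow> cox_class S m u = cox_class S m v"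
  unfolding cox_class_def by (auto intro: cox_rel.trans cox_rel.sym)

lemma cox_class_eq_iff: "set u \<subseteq> S \<Longrightarrow> cox_class S m u = cox_class S m v \<longleftrightarrow> cox_rel S m u v"
proof
  assume u: "set u \<subseteq> S" and e: "cox_class S m u = cox_class S m v"
  have "u \<in> cox_class S m u" unfolding cox_class_def using u by (simp add: cox_rel.refl)
  then have "u \<in> cox_class S m v" using e by simp
  then have "cox_rel S m v u" by (simp add: cox_class_def)
  then show "cox_rel S m u v" by (rule cox_rel.sym)
qed (rule cox_class_eq)


fun refls :: "nat list \<Rightarrow> nat list list" where
  "refls [] = []"
| "refls (a#w) = [a] # map (\<lambda>x. a # x @ [a]) (refls w)"

lemma length_refls[simp]: "length (refls w) = length w"
  by (induction w) auto

lemma refls_append: "refls (u@v) = refls u @ map (\<lambda>x. u @ x @ rev u) (refls v)"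
  by (induction u) (auto simp: comp_def)

lemma refls_set: "x \<in> set (refls w) \<Longrightarrow> set x \<subseteq> set w"
  by (induction w arbitrary: x) force+

definition cntr :: "nat set \<Rightarrow> coxmat \<Rightarrow> nat list \<Rightarrow> nat list list \<Rightarrow> nat" where
  "cntr S m r L = length (filter (\<lambda>x. cox_rel S m x r) L)"

lemma cntr_append[simp]: "cntr S m r (L1 @ L2) = cntr S m r L1 + cntr S m r L2"
  by (simp add: cntr_def)

lemma cntr_all2: "list_all2 (cox_rel S m) L1 L2 \<Longrightarrow> cntr S m r L1 = cntr S m r L2"
proof (induction rule: list_all2_induct)
  case (Cons x xs y ys)
  have "cox_rel S m x r \<longleftrightarrow> cox_rel S m y r"
    using Cons(1) by (meson cox_rel.sym cox_rel.trans)
  with Cons show ?case by (simp add: cntr_def)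
qed (simp add: cntr_def)

lemma conj_rel: "cox_rel S m x y \<Longrightarrow> set u \<subseteq> S \<Longrightarrow> cox_rel S m (u@x@rev u) (u@y@rev u)"
  by (metis cox_rel_app_left cox_rel_app_right cox_rel_set append_assoc set_rev)

lemma conj_triv: "cox_rel S m c [] \<Longrightarrow> set x \<subseteq> S \<Longrightarrow> cox_rel S m (c@x@rev c) x"
proof -
  assume c: "cox_rel S m c []" and x: "set x \<subseteq> S"
  have cs: "set c \<subseteq> S" using cox_rel_set[OF c] by simp
  have rc: "cox_rel S m (rev c) []" using cox_rel_rev[OF c] by simp
  have "cox_rel S m (c@(x@rev c)) ([]@(x@[]))"
    by (intro cox_rel_cong c cox_rel.refl rc) (use x in auto)
  then show ?thesis by simp
qed

fun alt :: "nat \<Rightarrow> nat \<Rightarrow> nat \<Rightarrow> nat list" where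
  "alt s t 0 = []"
| "alt s t (Suc k) = s # alt t s k"

lemma alt_set: "set (alt s t k) \<subseteq> {s,t}"
  by (induction k arbitrary: s t) auto

lemma alt_even: "alt s t (2*k) = concat (replicate k [s,t])"
  by (induction k) (auto simp: numeral_2_eq_2)

lemma alt_snoc: "alt s t (Suc k) = alt s t k @ [if even k then s else t]"
  by (induction k arbitrary: s t) auto

lemma alt_add_even: "alt s t (2*k + l) = alt s t (2*k) @ alt s t l"
  by (induction k) (auto simp: numeral_2_eq_2)

lemma refls_alt: "refls (alt s t l) = map (\<lambda>i. alt s t (2*i+1)) [0..<l]"
proof (induction l arbitrary: s t)
  case 0 then show ?case by simp
next
  case (Suc l)
  have e: "s # alt t s (2*i+1) @ [s] = alt s t (2 * Suc i + 1)" for i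
  proof -
    have "alt t s (Suc (2*i+1)) = alt t s (2*i+1) @ [s]" by (subst alt_snoc) simp
    moreover have "alt s t (Suc (Suc (2*i+1))) = s # alt t s (Suc (2*i+1))" by (simp only: alt.simps)
    moreover have "2 * Suc i + 1 = Suc (Suc (2*i+1))" by simp
    ultimately show ?thesis by simp
  qed
  have "refls (alt s t (Suc l)) = [s] # map (\<lambda>x. s # x @ [s]) (refls (alt t s l))" by simp
  also have "\<dots> = [s] # map (\<lambda>i. alt s t (2 * Suc i + 1)) [0..<l]"
    by (simp only: Suc map_map comp_def e)
  also have "\<dots> = map (\<lambda>i. alt s t (2*i+1)) [0..<Suc l]"
    by (simp add: map_upt_Suc del: upt_Suc alt.simps) simp
  finally show ?case .
qed

lemma map_upt_double: "map f [0..<k+k] = map f [0..<k] @ map (\<lambda>i. f (i+k)) [0..<k]"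
proof -
  have "[0..<k+k] = [0..<k] @ [k..<k+k]" by (rule upt_add_eq_append) simp
  moreover have "[k..<k+k] = map (\<lambda>i. i + k) [0..<k]" by (simp add: map_add_upt)
  ultimately show ?thesis by simp
qed

lemma cntr_braid_even:
  assumes "s \<in> S" "t \<in> S" "s \<noteq> t" "set u \<subseteq> S"
  shows "even (cntr S m r (map (\<lambda>x. u @ x @ rev u) (refls (concat (replicate (m s t) [s,t])))))"
proof -
  let ?k = "m s t"
  let ?f = "\<lambda>i. u @ alt s t (2*i+1) @ rev u"
  have "refls (concat (replicate ?k [s,t])) = map (\<lambda>i. alt s t (2*i+1)) [0..<2*?k]"
    by (simp add: refls_alt flip: alt_even)
  then have e: "map (\<lambda>x. u @ x @ rev u) (refls (concat (replicate ?k [s,t])))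
      = map ?f [0..<?k] @ map (\<lambda>i. ?f (i + ?k)) [0..<?k]"
    by (simp add: mult_2 map_upt_double del: upt_Suc) (simp add: ac_simps)
  have "list_all2 (cox_rel S m) (map (\<lambda>i. ?f (i + ?k)) [0..<?k]) (map ?f [0..<?k])"
  proof (rule list_all2_all_nthI)
    fix j assume "j < length (map (\<lambda>i. ?f (i + ?k)) [0..<?k])"
    then have j: "j < ?k" by simp
    have a: "alt s t (2*(j+?k)+1) = concat (replicate ?k [s,t]) @ alt s t (2*j+1)"
      using alt_add_even[of s t ?k "2*j+1"] by (simp add: alt_even algebra_simps)
    have "cox_rel S m (alt s t (2*(j+?k)+1)) (alt s t (2*j+1))"
      unfolding a using cox_rel.braid[of s S t "[]" "alt s t (2*j+1)" m] assms alt_set[of s t "2*j+1"]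
      by (simp add: subset_iff) blast
    from conj_rel[OF this assms(4)]
    show "cox_rel S m (map (\<lambda>i. ?f (i + ?k)) [0..<?k] ! j) (map ?f [0..<?k] ! j)"
      using j by (simp add: algebra_simps)
  qed simp
  then have "cntr S m r (map (\<lambda>i. ?f (i + ?k)) [0..<?k]) = cntr S m r (map ?f [0..<?k])"
    by (rule cntr_all2)
  then show ?thesis unfolding e by simp
qed

lemma cntr_parity:
  "cox_rel S m u v \<Longrightarrow> even (cntr S m r (refls u)) = even (cntr S m r (refls v))"
proof (induction rule: cox_rel.induct)
  case (invol s u v)
  let ?c = "\<lambda>w x. w @ x @ rev w"
  have l1: "list_all2 (cox_rel S m) (map (?c u) (map (?c [s,s]) (refls v))) (map (?c u) (refls v))"
  proof (rule list_all2_all_nthI)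
    fix j assume "j < length (map (?c u) (map (?c [s,s]) (refls v)))"
    then have j: "j < length v" by simp
    have xs: "set (refls v ! j) \<subseteq> S" using refls_set[OF nth_mem[of j "refls v"]] j invol by auto
    have "cox_rel S m (?c [s,s] (refls v ! j)) (refls v ! j)"
      by (rule conj_triv[OF cox_rel_ss]) (use invol xs in auto)
    from conj_rel[OF this, of u] invol have "cox_rel S m (?c u (?c [s,s] (refls v ! j))) (?c u (refls v ! j))" by simp
    then show "cox_rel S m (map (?c u) (map (?c [s,s]) (refls v)) ! j) (map (?c u) (refls v) ! j)"
      using j conj_rel invol by simp
  qed simp
  have m2: "even (cntr S m r (map (?c u) [[s],[s,s,s]]))"
  proof -
    have "cox_rel S m (u@[s,s,s]@rev u) (u@[s]@rev u)"
      using conj_rel[OF cox_rel.invol[of s S "[]" "[s]" m]] invol by auto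
    then have "cox_rel S m (u@[s,s,s]@rev u) r \<longleftrightarrow> cox_rel S m (u@[s]@rev u) r"
      by (meson cox_rel.sym cox_rel.trans)
    then show ?thesis by (simp add: cntr_def)
  qed
  have A: "cntr S m r (refls (u @ [s,s] @ v)) = cntr S m r (refls u) + cntr S m r (map (?c u) [[s],[s,s,s]])
     + cntr S m r (map (?c u) (map (?c [s,s]) (refls v)))"
    by (simp add: refls_append cntr_def comp_def)
  have B': "cntr S m r (refls (u @ v)) = cntr S m r (refls u) + cntr S m r (map (?c u) (refls v))"
    by (simp add: refls_append)
  show ?case by (simp only: A B' cntr_all2[OF l1, of r] even_add m2) simp
next
  case (braid s t u v)
  let ?c = "\<lambda>w x. w @ x @ rev w"
  let ?B = "concat (replicate (m s t) [s,t])"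
  have B: "cox_rel S m ?B []" using cox_rel.braid[of s S t "[]" "[]" m] braid by simp
  have l1: "list_all2 (cox_rel S m) (map (?c u) (map (?c ?B) (refls v))) (map (?c u) (refls v))"
  proof (rule list_all2_all_nthI)
    fix j assume "j < length (map (?c u) (map (?c ?B) (refls v)))"
    then have j: "j < length v" by simp
    have xs: "set (refls v ! j) \<subseteq> S" using refls_set[OF nth_mem[of j "refls v"]] j braid by auto
    have "cox_rel S m (?c ?B (refls v ! j)) (refls v ! j)"
      by (rule conj_triv[OF B xs])
    from conj_rel[OF this, of u] braid have "cox_rel S m (?c u (?c ?B (refls v ! j))) (?c u (refls v ! j))" by simp
    then show "cox_rel S m (map (?c u) (map (?c ?B) (refls v)) ! j) (map (?c u) (refls v) ! j)"
      using j conj_rel braid by simp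
  qed simp
  have "refls (u @ ?B @ v) = refls u @ map (?c u) (refls ?B) @ map (?c u) (map (?c ?B) (refls v))"
    by (simp add: refls_append)
  moreover have "refls (u @ v) = refls u @ map (?c u) (refls v)" by (simp add: refls_append)
  ultimately show ?case using cntr_all2[OF l1, of r] cntr_braid_even[of s S t u m r] braid by simp
qed auto


definition reduced :: "nat set \<Rightarrow> coxmat \<Rightarrow> nat list \<Rightarrow> bool" where
  "reduced S m w \<longleftrightarrow> set w \<subseteq> S \<and> (\<forall>v. cox_rel S m w v \<longrightarrow> length w \<le> length v)"

lemma refls_nth: "i < length w \<Longrightarrow> refls w ! i = take i w @ [w!i] @ rev (take i w)"
proof -
  assume i: "i < length w"
  have w: "w = take i w @ (w!i # drop (Suc i) w)" using i by (simp add: id_take_nth_drop)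
  have "refls w = refls (take i w) @ map (\<lambda>x. take i w @ x @ rev (take i w)) (refls (w!i # drop (Suc i) w))"
    by (subst w) (rule refls_append)
  then show ?thesis using i by (simp add: nth_append min_def)
qed

lemma reduced_refls_distinct:
  assumes red: "reduced S m w" and ij: "i < j" "j < length w"
  shows "\<not> cox_rel S m (refls w ! i) (refls w ! j)"
proof
  assume H: "cox_rel S m (refls w ! i) (refls w ! j)"
  have wS: "set w \<subseteq> S" using red by (simp add: reduced_def)
  define p where "p = take i w"
  define a where "a = w!i"
  define q where "q = take (j - Suc i) (drop (Suc i) w)"
  define b where "b = w!j"
  define z where "z = drop (Suc j) w"
  have tj: "take j w = p @ [a] @ q"
  proof -
    have "take j w = take i w @ take (j - i) (drop i w)"
      using ij by (metis le_add_diff_inverse less_imp_le_nat take_add)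
    moreover have "drop i w = w!i # drop (Suc i) w" using ij by (simp add: Cons_nth_drop_Suc)
    moreover have "take (j - i) (w!i # drop (Suc i) w) = w!i # q"
      using ij by (simp add: q_def take_Cons')
    ultimately show ?thesis by (simp add: p_def a_def)
  qed
  have wdec: "w = p @ [a] @ q @ [b] @ z"
  proof -
    have "w = take j w @ (w!j # drop (Suc j) w)" using ij by (simp add: id_take_nth_drop)
    then show ?thesis by (simp add: tj b_def z_def)
  qed
  have S: "set p \<subseteq> S" "a \<in> S" "set q \<subseteq> S" "b \<in> S" "set z \<subseteq> S"
    using wS by (subst (asm) wdec; auto)+
  have ri: "refls w ! i = p @ [a] @ rev p" using ij by (simp add: refls_nth p_def a_def)
  have rj: "refls w ! j = p @ ([a] @ q @ [b] @ rev q @ [a] @ rev p)"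
    using ij by (simp add: refls_nth tj b_def)
  have "cox_rel S m (p @ ([a] @ rev p)) (p @ ([a] @ q @ [b] @ rev q @ [a] @ rev p))"
    using H ri rj by simp
  then have "cox_rel S m ([a] @ rev p) ([a] @ q @ [b] @ rev q @ [a] @ rev p)"
    by (rule cox_rel_cancel_left[OF S(1)])
  then have X: "cox_rel S m ([a] @ rev p) (([a] @ q @ [b] @ rev q @ [a]) @ rev p)" by simp
  have "cox_rel S m [a] ([a] @ q @ [b] @ rev q @ [a])"
    using cox_rel_cancel_right[OF _ X] S by simp
  then have X2: "cox_rel S m ([a] @ []) ([a] @ (q @ [b] @ rev q @ [a]))" by simp
  have "cox_rel S m [] ((q @ [b]) @ (rev q @ [a]))"
    using cox_rel_cancel_left[OF _ X2] S by simp
  from cox_rel_move_right[OF this] have aq: "cox_rel S m (a # q) (q @ [b])" by simp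
  have "cox_rel S m (p @ (a # q) @ [b] @ z) (p @ (q @ [b]) @ [b] @ z)"
    by (intro cox_rel_cong aq cox_rel.refl) (use S in auto)
  also have "cox_rel S m (p @ (q @ [b]) @ [b] @ z) ((p @ q) @ z)"
    using cox_rel.invol[of b S "p@q" z m] S by simp
  finally have "cox_rel S m w (p @ q @ z)" using wdec by simp
  then have "length w \<le> length (p @ q @ z)" using red unfolding reduced_def by blast
  then show False by (subst (asm) (1) wdec) simp
qed

lemma reduced_cntr_le1:
  assumes red: "reduced S m w"
  shows "cntr S m r (refls w) \<le> 1"
proof -
  let ?A = "{i. i < length (refls w) \<and> cox_rel S m (refls w ! i) r}"
  have "\<forall>x\<in>?A. \<forall>y\<in>?A. x = y"
  proof (intro ballI)
    fix x y assume x: "x \<in> ?A" and y: "y \<in> ?A"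
    then have xy: "cox_rel S m (refls w ! x) (refls w ! y)" "cox_rel S m (refls w ! y) (refls w ! x)"
      by (auto intro: cox_rel.trans cox_rel.sym)
    show "x = y"
    proof (rule ccontr)
      assume "x \<noteq> y"
      then consider "x < y" | "y < x" by linarith
      then show False
        using reduced_refls_distinct[OF red] xy x y by cases auto
    qed
  qed
  then have "card ?A \<le> 1" by (simp add: card_le_Suc0_iff_eq)
  then show ?thesis by (simp add: cntr_def length_filter_conv_card)
qed

definition tc :: "nat set \<Rightarrow> nat list \<Rightarrow> nat" where
  "tc T w = length (filter (\<lambda>a. a \<in> T) w)"

lemma tc_append[simp]: "tc T (u@v) = tc T u + tc T v" by (simp add: tc_def)
lemma tc_Cons[simp]: "tc T (a#v) = (if a \<in> T then 1 else 0) + tc T v" by (simp add: tc_def)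
lemma tc_Nil[simp]: "tc T [] = 0" by (simp add: tc_def)
lemma tc_rev[simp]: "tc T (rev u) = tc T u" by (simp add: tc_def rev_filter[symmetric])

lemma tc_rep: "tc T (concat (replicate k [s,t])) = k * ((if s \<in> T then 1 else 0) + (if t \<in> T then 1 else 0))"
  by (induction k) auto

lemma tc_parity:
  assumes odd: "\<forall>s\<in>S. \<forall>t\<in>S. s \<noteq> t \<longrightarrow> odd (m s t) \<longrightarrow> (s \<in> T \<longleftrightarrow> t \<in> T)"
  shows "cox_rel S m u v \<Longrightarrow> even (tc T u) = even (tc T v)"
proof (induction rule: cox_rel.induct)
  case (braid s t u v)
  have "even (tc T (concat (replicate (m s t) [s,t])))"
    using odd braid by (auto simp: tc_rep)
  then show ?case by simp
qed auto

lemma filter_odd_refls: "length (filter (\<lambda>x. odd (tc T x)) (refls w)) = tc T w"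
  by (induction w) (auto simp: comp_def)

lemma reduced_tc_eq:
  assumes odd: "\<forall>s\<in>S. \<forall>t\<in>S. s \<noteq> t \<longrightarrow> odd (m s t) \<longrightarrow> (s \<in> T \<longleftrightarrow> t \<in> T)"
  assumes r1: "reduced S m w1" and r2: "reduced S m w2" and rel: "cox_rel S m w1 w2"
  shows "tc T w1 = tc T w2"
proof -
  let ?cls = "cox_class S m"
  let ?O = "\<lambda>w. filter (\<lambda>x. odd (tc T x)) (refls w)"
  have dist: "distinct (map ?cls (refls w))" if r: "reduced S m w" for w
  proof -
    have wS: "set w \<subseteq> S" using r by (simp add: reduced_def)
    show ?thesis
    proof (subst distinct_conv_nth, intro allI impI)
      fix i j assume i: "i < length (map ?cls (refls w))" and j: "j < length (map ?cls (refls w))"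
        and ne: "i \<noteq> j"
      have si: "set (refls w ! i) \<subseteq> S" using refls_set[OF nth_mem[of i "refls w"]] i wS by auto
      show "map ?cls (refls w) ! i \<noteq> map ?cls (refls w) ! j"
      proof
        assume "map ?cls (refls w) ! i = map ?cls (refls w) ! j"
        then have e: "cox_rel S m (refls w ! i) (refls w ! j)"
          using i j cox_class_eq_iff[OF si] by simp
        from ne consider "i < j" | "j < i" by linarith
        then show False
          using reduced_refls_distinct[OF r] e i j by cases (auto intro: cox_rel.sym)
      qed
    qed
  qed
  have lenO: "length (?O w) = card (?cls ` set (?O w))" if r: "reduced S m w" for w
  proof -
    have "distinct (map ?cls (?O w))" using distinct_map_filter[OF dist[OF r]] .
    then show ?thesis by (metis distinct_card length_map list.set_map)
  qed
  have sub: "?cls ` set (?O wa) \<subseteq> ?cls ` set (?O wb)"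
    if ra: "reduced S m wa" and rb: "reduced S m wb" and rab: "cox_rel S m wa wb" for wa wb
  proof
    fix C assume "C \<in> ?cls ` set (?O wa)"
    then obtain x where x: "x \<in> set (refls wa)" "odd (tc T x)" and C: "C = ?cls x" by auto
    have xS: "set x \<subseteq> S" using refls_set[OF x(1)] ra by (auto simp: reduced_def)
    have "cntr S m x (refls wa) \<ge> 1"
    proof -
      have "x \<in> set (filter (\<lambda>y. cox_rel S m y x) (refls wa))" using x xS by (simp add: cox_rel.refl)
      then show ?thesis unfolding cntr_def by (cases "filter (\<lambda>y. cox_rel S m y x) (refls wa)") auto
    qed
    with reduced_cntr_le1[OF ra, of x] have "cntr S m x (refls wa) = 1" by linarith
    then have "odd (cntr S m x (refls wa))" by simp
    then have "odd (cntr S m x (refls wb))" using cntr_parity[OF rab] by simp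
    then have "filter (\<lambda>y. cox_rel S m y x) (refls wb) \<noteq> []" unfolding cntr_def by auto
    then obtain y where y: "y \<in> set (refls wb)" "cox_rel S m y x"
      by (metis filter_empty_conv)
    have "odd (tc T y)" using tc_parity[OF odd y(2)] x(2) by simp
    moreover have "?cls y = C" using C cox_class_eq[OF y(2)] by simp
    ultimately show "C \<in> ?cls ` set (?O wb)" using y by auto
  qed
  have "?cls ` set (?O w1) = ?cls ` set (?O w2)"
    using sub[OF r1 r2 rel] sub[OF r2 r1 cox_rel.sym[OF rel]] by blast
  then show ?thesis using lenO[OF r1] lenO[OF r2] filter_odd_refls[of T w1] filter_odd_refls[of T w2]
    by simp
qed

lemma prod_eta_tc:
  assumes "\<forall>s\<in>set w. (\<eta>::nat \<Rightarrow> 'r::comm_monoid_mult) s = (if s \<in> T then a else b)"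
  shows "prod_list (map \<eta> w) = a ^ tc T w * b ^ (length w - tc T w)"
  using assms
proof (induction w)
  case (Cons x w)
  have le: "tc T w \<le> length w" by (simp add: tc_def)
  show ?case using Cons le
    by (auto simp: Suc_diff_le mult_ac)
qed simp

lemma reduced_prod_eq:
  assumes odd: "\<forall>s\<in>S. \<forall>t\<in>S. s \<noteq> t \<longrightarrow> odd (m s t) \<longrightarrow> (s \<in> T \<longleftrightarrow> t \<in> T)"
  assumes eta: "\<forall>s\<in>S. (\<eta>::nat \<Rightarrow> 'r::comm_monoid_mult) s = (if s \<in> T then a else b)"
  assumes r1: "reduced S m w1" and r2: "reduced S m w2" and rel: "cox_rel S m w1 w2"
  shows "prod_list (map \<eta> w1) = prod_list (map \<eta> w2)"
proof -
  have l: "length w1 = length w2" using r1 r2 rel cox_rel.sym[OF rel]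
    by (force simp: reduced_def)
  have t: "tc T w1 = tc T w2" by (rule reduced_tc_eq[OF odd r1 r2 rel])
  have s1: "set w1 \<subseteq> S" and s2: "set w2 \<subseteq> S" using r1 r2 by (auto simp: reduced_def)
  have e1: "\<forall>s\<in>set w1. \<eta> s = (if s \<in> T then a else b)" using eta s1 by blast
  have e2: "\<forall>s\<in>set w2. \<eta> s = (if s \<in> T then a else b)" using eta s2 by blast
  show ?thesis using prod_eta_tc[OF e1] prod_eta_tc[OF e2] l t by simp
qed


definition tr_ok :: "nat set \<Rightarrow> coxmat \<Rightarrow> nat set \<Rightarrow> coxmat \<Rightarrow> (nat \<Rightarrow> nat) \<Rightarrow> (nat \<Rightarrow> nat) \<Rightarrow> bool" where
  "tr_ok S m S' m' \<phi> f \<longleftrightarrow> (\<forall>a\<in>S. f (\<phi> a) = a \<and> \<phi> a \<in> S') \<and> (\<forall>s\<in>S'. f s \<in> S) \<and>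
     (\<forall>s\<in>S'. \<forall>t\<in>S'. s \<noteq> t \<longrightarrow> f s \<noteq> f t \<longrightarrow> m (f s) (f t) = m' s t)"

lemma cox_rel_xx: "x \<in> S \<Longrightarrow> set u \<subseteq> S \<Longrightarrow> set v \<subseteq> S \<Longrightarrow>
   cox_rel S m (u @ concat (replicate k [x,x]) @ v) (u @ v)"
proof (induction k)
  case 0 then show ?case by (simp add: cox_rel.refl)
next
  case (Suc k)
  have "cox_rel S m (u @ [x,x] @ (concat (replicate k [x,x]) @ v)) (u @ (concat (replicate k [x,x]) @ v))"
    by (rule cox_rel.invol) (use Suc set_concat_rep[of k x x] in auto)
  then show ?case using Suc by (auto intro: cox_rel.trans)
qed

lemma map_concat_rep: "map f (concat (replicate k [s,t])) = concat (replicate k [f s, f t])"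
  by (induction k) auto

lemma tr_map_f:
  assumes ok: "tr_ok S m S' m' \<phi> f"
  shows "cox_rel S' m' u v \<Longrightarrow> cox_rel S m (map f u) (map f v)"
proof (induction rule: cox_rel.induct)
  case (refl w) then show ?case using ok by (intro cox_rel.refl) (auto simp: tr_ok_def)
next
  case (sym v w) then show ?case by (blast intro: cox_rel.sym)
next
  case (trans u v w) then show ?case by (blast intro: cox_rel.trans)
next
  case (invol s u v)
  then show ?case using cox_rel.invol[of "f s" S "map f u" "map f v" m] ok by (auto simp: tr_ok_def)
next
  case (braid s t u v)
  have fu: "set (map f u) \<subseteq> S" "set (map f v) \<subseteq> S" "f s \<in> S" "f t \<in> S"
    using braid ok by (auto simp: tr_ok_def)
  show ?case
  proof (cases "f s = f t")
    case True
    then show ?thesis using cox_rel_xx[OF fu(3) fu(1) fu(2), of m "m' s t"]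
      by (simp add: map_concat_rep)
  next
    case False
    then have "m (f s) (f t) = m' s t" using ok braid by (auto simp: tr_ok_def)
    then show ?thesis using cox_rel.braid[OF fu(3) fu(4) False fu(1) fu(2), of m]
      by (simp add: map_concat_rep)
  qed
qed

lemma tr_map_phi:
  assumes ok: "tr_ok S m S' m' \<phi> f"
  shows "cox_rel S m u v \<Longrightarrow> cox_rel S' m' (map \<phi> u) (map \<phi> v)"
proof (induction rule: cox_rel.induct)
  case (refl w) then show ?case using ok by (intro cox_rel.refl) (auto simp: tr_ok_def)
next
  case (sym v w) then show ?case by (blast intro: cox_rel.sym)
next
  case (trans u v w) then show ?case by (blast intro: cox_rel.trans)
next
  case (invol s u v)
  then show ?case using cox_rel.invol[of "\<phi> s" S' "map \<phi> u" "map \<phi> v" m'] ok by (auto simp: tr_ok_def)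
next
  case (braid s t u v)
  have fu: "set (map \<phi> u) \<subseteq> S'" "set (map \<phi> v) \<subseteq> S'" "\<phi> s \<in> S'" "\<phi> t \<in> S'"
    using braid ok by (auto simp: tr_ok_def)
  have fs: "f (\<phi> s) = s" "f (\<phi> t) = t" using ok braid by (auto simp: tr_ok_def)
  have ne: "\<phi> s \<noteq> \<phi> t" using fs braid by metis
  have T2: "\<forall>s\<in>S'. \<forall>t\<in>S'. s \<noteq> t \<longrightarrow> f s \<noteq> f t \<longrightarrow> m (f s) (f t) = m' s t"
    using ok by (simp add: tr_ok_def)
  have "m (f (\<phi> s)) (f (\<phi> t)) = m' (\<phi> s) (\<phi> t)"
    using T2[rule_format, OF fu(3) fu(4) ne] fs braid by argo
  then have "m' (\<phi> s) (\<phi> t) = m s t" using fs by simp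
  then show ?case using cox_rel.braid[OF fu(3) fu(4) ne fu(1) fu(2), of m']
    by (simp add: map_concat_rep)
qed

lemma tr_fphi: "tr_ok S m S' m' \<phi> f \<Longrightarrow> set w \<subseteq> S \<Longrightarrow> map f (map \<phi> w) = w"
  by (induction w) (auto simp: tr_ok_def)

lemma cox_length_le: "v \<in> C \<Longrightarrow> cox_length C \<le> length v"
  unfolding cox_length_def by (rule Least_le) auto

lemma reduced_word_props: "v \<in> C \<Longrightarrow> reduced_word C \<in> C \<and> length (reduced_word C) = cox_length C"
proof -
  assume v: "v \<in> C"
  have "\<exists>w\<in>C. length w = cox_length C"
    unfolding cox_length_def by (rule LeastI_ex) (use v in auto)
  then obtain w where "w \<in> C \<and> length w = cox_length C" by blast
  then show ?thesis unfolding reduced_word_def by (rule someI)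
qed

lemma class_mem: "set w \<subseteq> S \<Longrightarrow> w \<in> cox_class S m w"
  by (simp add: cox_class_def cox_rel.refl)

lemma reduced_word_reduced:
  assumes "set w \<subseteq> S"
  shows "reduced S m (reduced_word (cox_class S m w))"
proof -
  let ?C = "cox_class S m w"
  have r: "reduced_word ?C \<in> ?C" "length (reduced_word ?C) = cox_length ?C"
    using reduced_word_props[OF class_mem[OF assms]] by auto
  have wr: "cox_rel S m w (reduced_word ?C)" using r by (simp add: cox_class_def)
  show ?thesis unfolding reduced_def
  proof (intro conjI allI impI)
    show "set (reduced_word ?C) \<subseteq> S" using cox_rel_set[OF wr] by simp
    fix v assume "cox_rel S m (reduced_word ?C) v"
    then have "v \<in> ?C" using cox_rel.trans[OF wr] by (simp add: cox_class_def)
    then show "length (reduced_word ?C) \<le> length v" using r cox_length_le by simp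
  qed
qed

lemma reduced_min: "reduced S m w \<Longrightarrow> cox_rel S m w v \<Longrightarrow> length v = length w \<Longrightarrow> reduced S m v"
proof -
  assume r: "reduced S m w" and wv: "cox_rel S m w v" and l: "length v = length w"
  show ?thesis unfolding reduced_def
  proof (intro conjI allI impI)
    show "set v \<subseteq> S" using cox_rel_set[OF wv] by simp
    fix x assume "cox_rel S m v x"
    then have "cox_rel S m w x" using wv by (rule cox_rel.trans[rotated])
    then show "length v \<le> length x" using r l by (simp add: reduced_def)
  qed
qed

definition eta_inv :: "nat set \<Rightarrow> coxmat \<Rightarrow> (nat \<Rightarrow> 'r::comm_monoid_mult) \<Rightarrow> bool" where
  "eta_inv S m \<eta> \<longleftrightarrow> (\<forall>w1 w2. reduced S m w1 \<longrightarrow> reduced S m w2 \<longrightarrow> cox_rel S m w1 w2 \<longrightarrow>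
      prod_list (map \<eta> w1) = prod_list (map \<eta> w2))"

lemma transport:
  fixes \<eta> \<eta>' :: "nat \<Rightarrow> 'r::comm_ring_1"
  assumes ok: "tr_ok S m S' m' \<phi> f"
    and eta: "\<forall>s\<in>S'. \<eta>' s = \<eta> (f s)"
    and inv: "eta_inv S m \<eta>"
    and G: "\<Gamma> \<subseteq> S"
  shows "fin_type S' m' (\<phi> ` \<Gamma>) = fin_type S m \<Gamma> \<and> poincare S' m' \<eta>' (\<phi> ` \<Gamma>) = poincare S m \<eta> \<Gamma>"
proof -
  let ?cls = "cox_class S m" and ?cls' = "cox_class S' m'"
  define h where "h C = ?cls' (map \<phi> (SOME w. w \<in> C))" for C
  have fphi: "\<forall>a\<in>S. f (\<phi> a) = a \<and> \<phi> a \<in> S'" using ok by (simp add: tr_ok_def)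
  have phiS: "set w \<subseteq> S \<Longrightarrow> set (map \<phi> w) \<subseteq> S'" for w using fphi by auto
  have h_cls: "h (?cls w) = ?cls' (map \<phi> w)" if w: "set w \<subseteq> S" for w
  proof -
    have "\<exists>v. v \<in> ?cls w" using class_mem[OF w] by blast
    then have "(SOME v. v \<in> ?cls w) \<in> ?cls w" by (rule someI_ex)
    then have "cox_rel S m w (SOME v. v \<in> ?cls w)" by (simp add: cox_class_def)
    from tr_map_phi[OF ok this] show ?thesis unfolding h_def by (metis cox_class_eq)
  qed
  have P: "parabolic S m \<Gamma> = ?cls ` {w. set w \<subseteq> \<Gamma>}" by (auto simp: parabolic_def)
  have P': "parabolic S' m' (\<phi> ` \<Gamma>) = h ` parabolic S m \<Gamma>"
  proof
    show "h ` parabolic S m \<Gamma> \<subseteq> parabolic S' m' (\<phi> ` \<Gamma>)"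
    proof
      fix C assume "C \<in> h ` parabolic S m \<Gamma>"
      then obtain w where w: "set w \<subseteq> \<Gamma>" "C = h (?cls w)" by (auto simp: P)
      then have "C = ?cls' (map \<phi> w)" using h_cls G by auto
      moreover have "set (map \<phi> w) \<subseteq> \<phi> ` \<Gamma>" using w by auto
      ultimately show "C \<in> parabolic S' m' (\<phi> ` \<Gamma>)" unfolding parabolic_def by blast
    qed
  next
    show "parabolic S' m' (\<phi> ` \<Gamma>) \<subseteq> h ` parabolic S m \<Gamma>"
    proof
      fix C assume "C \<in> parabolic S' m' (\<phi> ` \<Gamma>)"
      then obtain w' where w': "set w' \<subseteq> \<phi> ` \<Gamma>" and C: "C = ?cls' w'" by (auto simp: parabolic_def)
      have e: "map \<phi> (map f w') = w'" using w' G fphi by (induction w') auto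
      have s: "set (map f w') \<subseteq> \<Gamma>"
      proof
        fix y assume "y \<in> set (map f w')"
        then obtain x where x: "x \<in> set w'" "y = f x" by auto
        then obtain a where "a \<in> \<Gamma>" "x = \<phi> a" using w' by auto
        then show "y \<in> \<Gamma>" using G fphi x by auto
      qed
      have "C = h (?cls (map f w'))" using C h_cls[of "map f w'"] s G e by auto
      then show "C \<in> h ` parabolic S m \<Gamma>" using s by (auto simp: P)
    qed
  qed
  have inj: "inj_on h (parabolic S m \<Gamma>)"
  proof (rule inj_onI)
    fix C D assume C: "C \<in> parabolic S m \<Gamma>" and D: "D \<in> parabolic S m \<Gamma>" and e: "h C = h D"
    obtain w1 where w1: "set w1 \<subseteq> \<Gamma>" "C = ?cls w1" using C by (auto simp: P)
    obtain w2 where w2: "set w2 \<subseteq> \<Gamma>" "D = ?cls w2" using D by (auto simp: P)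
    have "?cls' (map \<phi> w1) = ?cls' (map \<phi> w2)" using e w1 w2 G h_cls by auto
    then have "cox_rel S' m' (map \<phi> w1) (map \<phi> w2)"
      using cox_class_eq_iff[OF phiS[of w1]] w1 G by auto
    from tr_map_f[OF ok this] have "cox_rel S m w1 w2" using tr_fphi[OF ok] w1 w2 G by auto
    then show "C = D" using w1 w2 cox_class_eq by simp
  qed
  have fin: "fin_type S' m' (\<phi> ` \<Gamma>) = fin_type S m \<Gamma>"
    unfolding fin_type_def P' using finite_image_iff[OF inj] G fphi by auto
  have term_eq: "(-1) ^ cox_length (h C) * prod_list (map \<eta>' (reduced_word (h C)))
      = (-1) ^ cox_length C * prod_list (map \<eta> (reduced_word C))" if C: "C \<in> parabolic S m \<Gamma>" for C
  proof -
    obtain w where w: "set w \<subseteq> \<Gamma>" "C = ?cls w" using C by (auto simp: P)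
    have wS: "set w \<subseteq> S" using w G by auto
    have hC: "h C = ?cls' (map \<phi> w)" using h_cls wS w by simp
    have lens: "(\<exists>v\<in>h C. length v = k) \<longleftrightarrow> (\<exists>v\<in>C. length v = k)" for k
    proof
      assume "\<exists>v\<in>h C. length v = k"
      then obtain v where v: "cox_rel S' m' (map \<phi> w) v" "length v = k" by (auto simp: hC cox_class_def)
      have "cox_rel S m w (map f v)" using tr_map_f[OF ok v(1)] tr_fphi[OF ok wS] by simp
      then show "\<exists>v\<in>C. length v = k" using v w by (auto simp: cox_class_def)
    next
      assume "\<exists>v\<in>C. length v = k"
      then obtain v where v: "cox_rel S m w v" "length v = k" by (auto simp: w cox_class_def)
      show "\<exists>v\<in>h C. length v = k" using tr_map_phi[OF ok v(1)] v(2) by (auto simp: hC cox_class_def)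
    qed
    have len: "cox_length (h C) = cox_length C" unfolding cox_length_def using lens by simp
    have mem': "map \<phi> w \<in> h C" using hC class_mem[OF phiS[OF wS]] by simp
    obtain r' where r': "r' = reduced_word (h C)" by simp
    have r'p: "r' \<in> h C" "length r' = cox_length C" using reduced_word_props[OF mem'] r' len by auto
    have r'S: "set r' \<subseteq> S'" using r'p(1) hC cox_rel_set by (auto simp: cox_class_def)
    have fr: "cox_rel S m w (map f r')"
      using tr_map_f[OF ok, of "map \<phi> w" r'] r'p(1) hC tr_fphi[OF ok wS] by (simp add: cox_class_def)
    obtain r where r: "r = reduced_word C" by simp
    have red: "reduced S m r" using reduced_word_reduced[OF wS] r w by simp
    have rC: "r \<in> C" "length r = cox_length C" using reduced_word_props[OF class_mem[OF wS]] r w by auto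
    have wr: "cox_rel S m w r" using rC w by (simp add: cox_class_def)
    have rfr: "cox_rel S m r (map f r')" using wr fr by (meson cox_rel.sym cox_rel.trans)
    have red2: "reduced S m (map f r')" using reduced_min[OF red rfr] r'p rC by simp
    have "prod_list (map \<eta> r) = prod_list (map \<eta> (map f r'))"
      using inv red red2 rfr by (simp add: eta_inv_def)
    also have "\<dots> = prod_list (map \<eta>' r')"
    proof -
      have "map \<eta> (map f r') = map \<eta>' r'" unfolding map_map by (rule map_cong) (use r'S eta in auto)
      then show ?thesis by (simp only:)
    qed
    finally show ?thesis using len r r' by simp
  qed
  have "poincare S' m' \<eta>' (\<phi> ` \<Gamma>) = (\<Sum>C\<in>h ` parabolic S m \<Gamma>.
      (-1) ^ cox_length C * prod_list (map \<eta>' (reduced_word C)))"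
    by (simp add: poincare_def P')
  also have "\<dots> = (\<Sum>C\<in>parabolic S m \<Gamma>.
      (-1) ^ cox_length (h C) * prod_list (map \<eta>' (reduced_word (h C))))"
    by (rule sum.reindex[OF inj, unfolded comp_def])
  also have "\<dots> = poincare S m \<eta> \<Gamma>"
    unfolding poincare_def by (rule sum.cong[OF HOL.refl term_eq])
  finally show ?thesis using fin by simp
qed


lemma braid_rel_gen:
  assumes "a \<in> S" "b \<in> S" "a \<noteq> b"
  shows "cox_rel S m [] (concat (replicate (m a b) [a,b]))"
  using cox_rel.braid[of a S b "[]" "[]" m] assms by (simp add: cox_rel.sym)

lemma comm2: assumes "a \<in> S" "b \<in> S" "a \<noteq> b" "m a b = 2"
  shows "cox_rel S m [a,b] [b,a]"
proof -
  have "cox_rel S m [] ([a,b] @ [a,b])" using braid_rel_gen[OF assms(1-3), of m] assms(4)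
    by (simp add: numeral_eq_Suc)
  from cox_rel_move_right[OF this] show ?thesis by (simp add: cox_rel.sym)
qed

lemma braid3: assumes "a \<in> S" "b \<in> S" "a \<noteq> b" "m a b = 3"
  shows "cox_rel S m [a,b,a] [b,a,b]"
proof -
  have "cox_rel S m [] ([a,b,a] @ [b,a,b])" using braid_rel_gen[OF assms(1-3), of m] assms(4)
    by (simp add: numeral_eq_Suc)
  from cox_rel_move_right[OF this] show ?thesis by (simp add: cox_rel.sym)
qed

lemma braid4: assumes "a \<in> S" "b \<in> S" "a \<noteq> b" "m a b = 4"
  shows "cox_rel S m [a,b,a,b] [b,a,b,a]"
proof -
  have "cox_rel S m [] ([a,b,a,b] @ [a,b,a,b])" using braid_rel_gen[OF assms(1-3), of m] assms(4)
    by (simp add: numeral_eq_Suc)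
  from cox_rel_move_right[OF this] show ?thesis by (simp add: cox_rel.sym)
qed

definition walk_ok :: "nat set \<Rightarrow> coxmat \<Rightarrow> nat set \<Rightarrow> (nat \<Rightarrow> nat) \<Rightarrow> nat \<Rightarrow> bool" where
  "walk_ok S m K c L \<longleftrightarrow> K \<subseteq> S \<and> 0 < L \<and> (\<forall>l<L. c l \<in> K) \<and>
    (\<forall>a\<in>S. \<forall>b\<in>S. m a b = m b a) \<and>
    (\<forall>l. l + 1 < L \<longrightarrow> c l \<noteq> c (l+1) \<and> (m (c l) (c (l+1)) = 3 \<or> m (c l) (c (l+1)) = 4)) \<and>
    (\<forall>l<L. \<forall>s\<in>K. s \<noteq> c l \<longrightarrow> m s (c l) \<noteq> 2 \<longrightarrow> (0 < l \<and> s = c (l-1)) \<or> (l+1 < L \<and> s = c (l+1))) \<and>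
    (\<forall>p. p + 2 < L + 1 \<longrightarrow> m (c p) (c (p+1)) = 3 \<longrightarrow> 0 < p \<longrightarrow> c (p-1) \<noteq> c (p+1)) \<and>
    (\<forall>p. p + 1 < L \<longrightarrow> m (c p) (c (p+1)) = 4 \<longrightarrow> \<not> (p + 2 < L \<and> c (p+2) = c p) \<longrightarrow>
        (0 < p \<and> c (p-1) = c (p+1) \<and> (1 < p \<longrightarrow> c (p-2) \<noteq> c p)))"

definition wr :: "(nat \<Rightarrow> nat) \<Rightarrow> nat \<Rightarrow> nat list" where
  "wr c l = map c [0..<l]"

lemma wr_Suc: "wr c (Suc l) = wr c l @ [c l]" by (simp add: wr_def)

lemma wr_set: "walk_ok S m K c L \<Longrightarrow> l \<le> L \<Longrightarrow> set (wr c l) \<subseteq> K"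
  by (auto simp: wr_def walk_ok_def)

lemma walk_conj:
  assumes ok: "walk_ok S m K c L"
  shows "l \<le> L \<Longrightarrow> s \<in> K \<Longrightarrow> (l < L \<longrightarrow> s \<noteq> c l) \<Longrightarrow> (0 < l \<longrightarrow> s \<noteq> c (l-1)) \<Longrightarrow>
    \<exists>s'\<in>K - {c 0}. cox_rel S m (wr c l @ [s]) ([s'] @ wr c l)"
proof (induction l arbitrary: s rule: less_induct)
  case (less l)
  have KS: "K \<subseteq> S" and L0: "0 < L" and cK: "\<forall>l<L. c l \<in> K" and sym: "\<forall>a\<in>S. \<forall>b\<in>S. m a b = m b a"
    and H2: "\<forall>l. l + 1 < L \<longrightarrow> c l \<noteq> c (l+1) \<and> (m (c l) (c (l+1)) = 3 \<or> m (c l) (c (l+1)) = 4)"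
    and H3: "\<forall>l<L. \<forall>s\<in>K. s \<noteq> c l \<longrightarrow> m s (c l) \<noteq> 2 \<longrightarrow> (0 < l \<and> s = c (l-1)) \<or> (l+1 < L \<and> s = c (l+1))"
    and H4: "\<forall>p. p + 2 < L + 1 \<longrightarrow> m (c p) (c (p+1)) = 3 \<longrightarrow> 0 < p \<longrightarrow> c (p-1) \<noteq> c (p+1)"
    and H5: "\<forall>p. p + 1 < L \<longrightarrow> m (c p) (c (p+1)) = 4 \<longrightarrow> \<not> (p + 2 < L \<and> c (p+2) = c p) \<longrightarrow>
        (0 < p \<and> c (p-1) = c (p+1) \<and> (1 < p \<longrightarrow> c (p-2) \<noteq> c p))"
    using ok unfolding walk_ok_def by blast+
  have sS: "s \<in> S" using less KS by auto
  have wS: "\<And>j. j \<le> L \<Longrightarrow> set (wr c j) \<subseteq> S" using wr_set[OF ok] KS by blast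
  show ?case
  proof (cases l)
    case 0
    then have "s \<noteq> c 0" using less L0 by auto
    then show ?thesis using less 0 sS by (auto simp: wr_def intro!: bexI[of _ s] cox_rel.refl)
  next
    case (Suc l')
    have l'L: "l' < L" using less Suc by simp
    have cl'S: "c l' \<in> S" using cK l'L KS by auto
    have sne: "s \<noteq> c l'" using less Suc by simp
    show ?thesis
    proof (cases "m s (c l') = 2")
      case True
      have nprev: "0 < l' \<longrightarrow> s \<noteq> c (l'-1)"
      proof
        assume "0 < l'"
        then have "m (c (l'-1)) (c l') \<noteq> 2" using H2[rule_format, of "l'-1"] l'L by auto
        then show "s \<noteq> c (l'-1)" using True by auto
      qed
      obtain s' where s': "s' \<in> K - {c 0}" "cox_rel S m (wr c l' @ [s]) ([s'] @ wr c l')"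
        using less.IH[of l' s] Suc less l'L sne nprev by auto
      have "cox_rel S m (wr c l' @ [c l', s]) (wr c l' @ [s, c l'])"
        using comm2[of "c l'" S s m] cl'S sS sne True sym wS[of l'] l'L
        by (intro cox_rel_app_left) auto
      also have "cox_rel S m (wr c l' @ [s, c l']) ([s'] @ wr c l' @ [c l'])"
        using cox_rel_app_right[OF s'(2), of "[c l']"] cl'S by simp
      finally show ?thesis using s'(1) Suc by (auto simp: wr_Suc)
    next
      case False
      have "(0 < l' \<and> s = c (l'-1)) \<or> (l'+1 < L \<and> s = c (l'+1))"
        using H3[rule_format, OF l'L less(3) sne False] .
      moreover have "\<not> (l'+1 < L \<and> s = c (l'+1))" using less Suc by auto
      ultimately obtain p where p: "l' = Suc p" "s = c p" by (cases l') auto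
      have pL: "p + 1 < L" using l'L p by simp
      have cpS: "c p \<in> S" using cK pL KS by auto
      have dne: "c p \<noteq> c (p+1)" using H2 pL by auto
      have m34: "m (c p) (c (p+1)) = 3 \<or> m (c p) (c (p+1)) = 4" using H2 pL by auto
      then show ?thesis
      proof
        assume m3: "m (c p) (c (p+1)) = 3"
        have c1K: "c (p+1) \<in> K" using cK pL by auto
        have nb: "0 < p \<longrightarrow> c (p+1) \<noteq> c (p-1)" using H4[rule_format, of p] pL m3 by auto
        have pl: "p < l" "p \<le> L" using p Suc pL by auto
        have "\<exists>s'\<in>K - {c 0}. cox_rel S m (wr c p @ [c (p+1)]) ([s'] @ wr c p)"
          using less.IH[OF pl c1K] dne nb by auto
        then obtain s' where s': "s' \<in> K - {c 0}" "cox_rel S m (wr c p @ [c (p+1)]) ([s'] @ wr c p)"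
          by blast
        have "cox_rel S m (wr c p @ [c p, c (p+1), c p]) (wr c p @ [c (p+1), c p, c (p+1)])"
          using braid3[of "c p" S "c (p+1)" m] cpS c1K KS dne m3 wS[of p] pL
          by (intro cox_rel_app_left) auto
        also have "cox_rel S m (wr c p @ [c (p+1), c p, c (p+1)]) ([s'] @ wr c p @ [c p, c (p+1)])"
          using cox_rel_app_right[OF s'(2), of "[c p, c (p+1)]"] cpS c1K KS by auto
        finally show ?thesis using s'(1) Suc p by (auto simp: wr_Suc)
      next
        assume m4: "m (c p) (c (p+1)) = 4"
        have "\<not> (p + 2 < L \<and> c (p+2) = c p)" using less Suc p by auto
        then obtain q where q: "p = Suc q" "c q = c (q+2)" "0 < q \<longrightarrow> c (q-1) \<noteq> c (q+1)"
          using H5[rule_format, OF pL m4] by (cases p) auto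
        have qL: "q + 2 < L" using pL q by simp
        let ?x = "c q" and ?y = "c (q+1)"
        have xK: "?x \<in> K" and yK: "?y \<in> K" using cK qL by auto
        have xy: "?x \<noteq> ?y" using H2[rule_format, of q] qL by auto
        have "m (c (q+2)) (c (q+1)) = m (c (q+1)) (c (q+2))"
          using sym xK yK KS q(2) by (metis subsetD)
        then have mxy: "m ?x ?y = 4" using m4 q by simp
        have ql: "q < l" "q \<le> L" using p q Suc qL by auto
        have "\<exists>s'\<in>K - {c 0}. cox_rel S m (wr c q @ [?y]) ([s'] @ wr c q)"
          using less.IH[OF ql yK] xy q(3) by auto
        then obtain s' where s': "s' \<in> K - {c 0}" "cox_rel S m (wr c q @ [?y]) ([s'] @ wr c q)"
          by blast
        have "cox_rel S m (wr c q @ [?x, ?y, ?x, ?y]) (wr c q @ [?y, ?x, ?y, ?x])"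
          using braid4[of ?x S ?y m] xK yK KS xy mxy wS[of q] qL
          by (intro cox_rel_app_left) auto
        also have "cox_rel S m (wr c q @ [?y, ?x, ?y, ?x]) ([s'] @ wr c q @ [?x, ?y, ?x])"
          using cox_rel_app_right[OF s'(2), of "[?x, ?y, ?x]"] xK yK KS by auto
        finally show ?thesis using s'(1) Suc p q by (auto simp: wr_Suc)
      qed
    qed
  qed
qed


lemma coset_step:
  assumes ok: "walk_ok S m K c L"
    and X'fin: "finite X'" and X'set: "\<forall>x\<in>X'. set x \<subseteq> K - {c 0}"
    and X'cov: "\<forall>w. set w \<subseteq> K - {c 0} \<longrightarrow> (\<exists>x\<in>X'. cox_rel S m w x)"
  shows "\<exists>X. finite X \<and> (\<forall>x\<in>X. set x \<subseteq> K) \<and> (\<forall>w. set w \<subseteq> K \<longrightarrow> (\<exists>x\<in>X. cox_rel S m w x))"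
proof -
  have KS: "K \<subseteq> S" and cK: "\<forall>l<L. c l \<in> K" using ok by (auto simp: walk_ok_def)
  define X where "X = (\<lambda>(u,l). u @ wr c l) ` (X' \<times> {..L})"
  have fin: "finite X" using X'fin by (simp add: X_def)
  have Xset: "\<forall>x\<in>X. set x \<subseteq> K" using X'set wr_set[OF ok] by (fastforce simp: X_def)
  have cov: "set w \<subseteq> K \<Longrightarrow> \<exists>u l. u \<in> X' \<and> l \<le> L \<and> cox_rel S m w (u @ wr c l)" for w
  proof (induction w rule: rev_induct)
    case Nil
    obtain x where "x \<in> X'" "cox_rel S m [] x" using X'cov[rule_format, of "[]"] by auto
    then show ?case by (intro exI[of _ x] exI[of _ 0]) (simp add: wr_def)
  next
    case (snoc s w)
    then obtain u l where ul: "u \<in> X'" "l \<le> L" "cox_rel S m w (u @ wr c l)" by auto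
    have sK: "s \<in> K" using snoc by auto
    have uS: "set u \<subseteq> S" using X'set ul KS by auto
    have wrS: "set (wr c j) \<subseteq> S" if "j \<le> L" for j using wr_set[OF ok that] KS by auto
    have ws: "cox_rel S m (w @ [s]) (u @ wr c l @ [s])"
      using cox_rel_app_right[OF ul(3), of "[s]"] sK KS by auto
    consider (a) "l < L \<and> s = c l" | (b) "0 < l \<and> s = c (l-1)" | (c) "(l < L \<longrightarrow> s \<noteq> c l) \<and> (0 < l \<longrightarrow> s \<noteq> c (l-1))"
      by blast
    then show ?case
    proof cases
      case a
      then show ?thesis using ws ul by (intro exI[of _ u] exI[of _ "Suc l"]) (auto simp: wr_Suc)
    next
      case b
      then obtain l' where l': "l = Suc l'" "s = c l'" by (cases l) auto
      have "cox_rel S m (u @ wr c l @ [s]) ((u @ wr c l') @ [s, s] @ [])" using l' ul uS wrS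
        by (simp add: wr_Suc cox_rel.refl) (intro cox_rel.refl; use sK KS in auto)
      also have "cox_rel S m ((u @ wr c l') @ [s, s] @ []) ((u @ wr c l') @ [])"
        by (rule cox_rel.invol) (use sK KS uS wrS l' ul in auto)
      finally show ?thesis using ws ul l' by (intro exI[of _ u] exI[of _ l']) (auto intro: cox_rel.trans)
    next
      case c
      obtain s' where s': "s' \<in> K - {c 0}" "cox_rel S m (wr c l @ [s]) ([s'] @ wr c l)"
        using walk_conj[OF ok ul(2) sK] c by auto
      have "set (u @ [s']) \<subseteq> K - {c 0}" using X'set ul s' by auto
      then obtain u' where u': "u' \<in> X'" "cox_rel S m (u @ [s']) u'" using X'cov by blast
      have "cox_rel S m (u @ (wr c l @ [s])) (u @ ([s'] @ wr c l))"
        using cox_rel_app_left[OF s'(2) uS] .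
      also have "cox_rel S m (u @ ([s'] @ wr c l)) (u' @ wr c l)"
        using cox_rel_app_right[OF u'(2) wrS[OF ul(2)]] by simp
      finally have "cox_rel S m (u @ wr c l @ [s]) (u' @ wr c l)" by simp
      then show ?thesis using ws u' ul by (intro exI[of _ u'] exI[of _ l]) (auto intro: cox_rel.trans)
    qed
  qed
  have "\<forall>w. set w \<subseteq> K \<longrightarrow> (\<exists>x\<in>X. cox_rel S m w x)"
  proof (intro allI impI)
    fix w assume "set w \<subseteq> K"
    then obtain u l where "u \<in> X'" "l \<le> L" "cox_rel S m w (u @ wr c l)" using cov by blast
    then show "\<exists>x\<in>X. cox_rel S m w x" by (auto simp: X_def)
  qed
  with fin Xset show ?thesis by blast
qed


lemma B_mat_eq: "1 \<le> n \<Longrightarrow> B_mat n i j = (if (i = n-1 \<and> j = n) \<or> (i = n \<and> j = n-1) then 4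
    else if i+1 = j \<or> j+1 = i then 3 else 2)"
  unfolding B_mat_def adjacent_def by (auto simp: doubleton_eq_iff)

lemma B_ne2: "1 \<le> n \<Longrightarrow> B_mat n s t \<noteq> 2 \<longleftrightarrow> (s+1 = t \<or> t+1 = s)"
  by (simp add: B_mat_eq)

lemma B_4: "1 \<le> n \<Longrightarrow> B_mat n s t = 4 \<longleftrightarrow> ((s = n-1 \<and> t = n) \<or> (s = n \<and> t = n-1))"
  by (simp add: B_mat_eq)

lemma B_34: "1 \<le> n \<Longrightarrow> (s+1 = t \<or> t+1 = s) \<Longrightarrow> B_mat n s t = 3 \<or> B_mat n s t = 4"
  by (simp add: B_mat_eq)

lemma B_sym: "B_mat n s t = B_mat n t s"
  unfolding B_mat_def adjacent_def by (auto simp: insert_commute)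

definition cw :: "nat \<Rightarrow> nat \<Rightarrow> nat \<Rightarrow> nat" where
  "cw k d p = (if p \<le> d then k + p else k + 2*d - p)"

lemma cw_adj: "l + 1 < 2*d+1 \<Longrightarrow> cw k d l = cw k d (l+1) + 1 \<or> cw k d (l+1) = cw k d l + 1"
  unfolding cw_def by (cases "l + 1 \<le> d"; cases "l \<le> d") auto

lemma cw_range: "l < 2*d+1 \<Longrightarrow> k \<le> cw k d l \<and> cw k d l \<le> k + d"
  unfolding cw_def by auto

lemma cw_nb: "l < 2*d+1 \<Longrightarrow> k \<le> s \<Longrightarrow> s \<le> k + d \<Longrightarrow> (s = cw k d l + 1 \<or> s + 1 = cw k d l) \<Longrightarrow>
    0 < l \<and> s = cw k d (l-1) \<or> l+1 < 2*d+1 \<and> s = cw k d (l+1)"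
  unfolding cw_def by (cases "l + 1 \<le> d"; cases "l \<le> d"; cases "l = 0") auto

lemma cw_eq2: "0 < p \<Longrightarrow> p + 1 < 2*d+1 \<Longrightarrow> cw k d (p-1) = cw k d (p+1) \<Longrightarrow> p = d"
  unfolding cw_def by (cases "p + 1 \<le> d"; cases "p \<le> d") (auto split: if_split_asm)

lemma cw_max: "p < 2*d+1 \<Longrightarrow> cw k d p = k + d \<Longrightarrow> p = d"
  unfolding cw_def by (auto split: if_split_asm)

lemma cw_top: "p \<le> d \<Longrightarrow> cw k d p = k + p" by (simp add: cw_def)
lemma cw_desc: "e \<le> d \<Longrightarrow> cw k d (d + e) = k + d - e" by (simp add: cw_def add.commute)

lemma walk_B:
  assumes n: "2 \<le> n" and k: "1 \<le> k" "k \<le> n"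
  shows "walk_ok {1..n} (B_mat n) {k..n} (cw k (n-k)) (2*(n-k)+1)"
proof -
  obtain d where nd: "n = k + d" using k by (metis le_add_diff_inverse)
  have d: "n - k = d" using nd by simp
  have n1: "1 \<le> n" using n by simp
  have F1: "{k..n} \<subseteq> {1..n}" using k by auto
  have F3: "\<forall>l<2*d+1. cw k d l \<in> {k..n}" using cw_range[of _ d k] nd by auto
  have F4: "\<forall>a\<in>{1..n}. \<forall>b\<in>{1..n}. B_mat n a b = B_mat n b a" using B_sym by blast
  have F5: "\<forall>l. l + 1 < 2*d+1 \<longrightarrow> cw k d l \<noteq> cw k d (l+1) \<and>
      (B_mat n (cw k d l) (cw k d (l+1)) = 3 \<or> B_mat n (cw k d l) (cw k d (l+1)) = 4)"
  proof (intro allI impI)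
    fix l assume a: "l + 1 < 2*d+1"
    from cw_adj[OF a, of k] have "cw k d l + 1 = cw k d (l+1) \<or> cw k d (l+1) + 1 = cw k d l" by auto
    with B_34[OF n1 this] show "cw k d l \<noteq> cw k d (l+1) \<and>
      (B_mat n (cw k d l) (cw k d (l+1)) = 3 \<or> B_mat n (cw k d l) (cw k d (l+1)) = 4)" by auto
  qed
  have F6: "\<forall>l<2*d+1. \<forall>s\<in>{k..n}. s \<noteq> cw k d l \<longrightarrow> B_mat n s (cw k d l) \<noteq> 2 \<longrightarrow>
      (0 < l \<and> s = cw k d (l-1)) \<or> (l+1 < 2*d+1 \<and> s = cw k d (l+1))"
  proof (intro allI impI ballI)
    fix l s assume l: "l < 2*d+1" and s: "s \<in> {k..n}" and ne: "s \<noteq> cw k d l"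
      and b: "B_mat n s (cw k d l) \<noteq> 2"
    have "s + 1 = cw k d l \<or> cw k d l + 1 = s" using b B_ne2[OF n1] by simp
    then show "0 < l \<and> s = cw k d (l-1) \<or> l+1 < 2*d+1 \<and> s = cw k d (l+1)"
      using cw_nb[OF l, of k s] s nd by auto
  qed
  have F7: "\<forall>p. p + 2 < 2*d+1 + 1 \<longrightarrow> B_mat n (cw k d p) (cw k d (p+1)) = 3 \<longrightarrow> 0 < p \<longrightarrow>
      cw k d (p-1) \<noteq> cw k d (p+1)"
  proof (intro allI impI)
    fix p assume p: "p + 2 < 2*d+1 + 1" and m3: "B_mat n (cw k d p) (cw k d (p+1)) = 3" and p0: "0 < p"
    show "cw k d (p-1) \<noteq> cw k d (p+1)"
    proof
      assume e: "cw k d (p-1) = cw k d (p+1)"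
      have pd: "p = d" using cw_eq2[OF p0 _ e] p by simp
      have "cw k d p = n" using pd nd cw_top[of p d k] by simp
      moreover have "cw k d (p+1) = n - 1" using pd nd cw_desc[of 1 d k] p0 by simp
      ultimately show False using m3 B_4[OF n1, of n "n-1"] by simp
    qed
  qed
  have F8: "\<forall>p. p + 1 < 2*d+1 \<longrightarrow> B_mat n (cw k d p) (cw k d (p+1)) = 4 \<longrightarrow>
      \<not> (p + 2 < 2*d+1 \<and> cw k d (p+2) = cw k d p) \<longrightarrow>
      (0 < p \<and> cw k d (p-1) = cw k d (p+1) \<and> (1 < p \<longrightarrow> cw k d (p-2) \<noteq> cw k d p))"
  proof (intro allI impI)
    fix p assume p: "p + 1 < 2*d+1" and m4: "B_mat n (cw k d p) (cw k d (p+1)) = 4"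
      and nc: "\<not> (p + 2 < 2*d+1 \<and> cw k d (p+2) = cw k d p)"
    have c4: "(cw k d p = n-1 \<and> cw k d (p+1) = n) \<or> (cw k d p = n \<and> cw k d (p+1) = n-1)"
      using m4 B_4[OF n1] by simp
    then show "0 < p \<and> cw k d (p-1) = cw k d (p+1) \<and> (1 < p \<longrightarrow> cw k d (p-2) \<noteq> cw k d p)"
    proof
      assume a: "cw k d p = n-1 \<and> cw k d (p+1) = n"
      then have "p + 1 = d" using cw_max[of "p+1" d k] p nd by simp
      then have "p + 2 < 2*d+1 \<and> cw k d (p+2) = cw k d p"
        using cw_top[of p d k] cw_desc[of 1 d k] by (simp add: numeral_2_eq_2)
      with nc show ?thesis by blast
    next
      assume a: "cw k d p = n \<and> cw k d (p+1) = n-1"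
      then have pd: "p = d" using cw_max[of p d k] p nd by simp
      then have d0: "0 < d" using p by simp
      have "cw k d (p-1) = k + d - 1" using cw_top[of "p-1" d k] pd d0 by simp
      moreover have "cw k d (p+1) = k + d - 1" using cw_desc[of 1 d k] pd d0 by simp
      moreover have "1 < p \<longrightarrow> cw k d (p-2) \<noteq> cw k d p" using cw_top[of "p-2" d k] cw_top[of p d k] pd by auto
      ultimately show ?thesis using pd d0 by simp
    qed
  qed
  show ?thesis unfolding walk_ok_def d using F1 F3 F4 F5 F6 F7 F8 by simp
qed

lemma B_finite_cover:
  assumes n: "2 \<le> n"
  shows "j \<le> n \<Longrightarrow> \<exists>X. finite X \<and> (\<forall>x\<in>X. set x \<subseteq> {n+1-j..n}) \<and>
           (\<forall>w. set w \<subseteq> {n+1-j..n} \<longrightarrow> (\<exists>x\<in>X. cox_rel {1..n} (B_mat n) w x))"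
proof (induction j)
  case 0
  show ?case
  proof (intro exI[of _ "{[]}"] conjI ballI allI impI)
    fix w assume "set w \<subseteq> {n+1-0..n}"
    then have "w = []" by (cases w) auto
    then show "\<exists>x\<in>{[]}. cox_rel {1..n} (B_mat n) w x" by (simp add: cox_rel.refl)
  qed auto
next
  case (Suc j)
  let ?k = "n - j"
  have k: "1 \<le> ?k" "?k \<le> n" using Suc by auto
  have ok: "walk_ok {1..n} (B_mat n) {?k..n} (cw ?k (n-?k)) (2*(n-?k)+1)" by (rule walk_B[OF n k])
  have K': "{?k..n} - {cw ?k (n-?k) 0} = {n+1-j..n}" using Suc by (auto simp: cw_def)
  obtain X' where X': "finite X'" "\<forall>x\<in>X'. set x \<subseteq> {n+1-j..n}"
    "\<forall>w. set w \<subseteq> {n+1-j..n} \<longrightarrow> (\<exists>x\<in>X'. cox_rel {1..n} (B_mat n) w x)" using Suc by auto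
  have "n + 1 - Suc j = ?k" using Suc by simp
  then show ?case using coset_step[OF ok X'(1)] X'(2,3) K' by simp
qed

lemma B_fin_type:
  assumes n: "2 \<le> n" and G: "\<Gamma> \<subseteq> {1..n}"
  shows "fin_type {1..n} (B_mat n) \<Gamma>"
proof -
  obtain X where X: "finite X" "\<forall>w. set w \<subseteq> {1..n} \<longrightarrow> (\<exists>x\<in>X. cox_rel {1..n} (B_mat n) w x)"
    using B_finite_cover[OF n, of n] by auto
  have "parabolic {1..n} (B_mat n) \<Gamma> \<subseteq> cox_class {1..n} (B_mat n) ` X"
  proof
    fix C assume "C \<in> parabolic {1..n} (B_mat n) \<Gamma>"
    then obtain w where w: "set w \<subseteq> \<Gamma>" "C = cox_class {1..n} (B_mat n) w" by (auto simp: parabolic_def)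
    then obtain x where "x \<in> X" "cox_rel {1..n} (B_mat n) w x" using X G by blast
    then show "C \<in> cox_class {1..n} (B_mat n) ` X" using w cox_class_eq by auto
  qed
  then show ?thesis unfolding fin_type_def using G X(1) finite_subset by blast
qed


definition fB :: "nat \<Rightarrow> nat" where "fB s = (if s \<le> 2 then 1 else s - 1)"
definition ph1 :: "nat \<Rightarrow> nat" where "ph1 a = (if a = 1 then 1 else a + 1)"
definition ph2 :: "nat \<Rightarrow> nat" where "ph2 a = (if a = 1 then 2 else a + 1)"

lemma bt_edge_iff:
  assumes n: "2 \<le> n" and s: "s \<in> {1..n+1}" and t: "t \<in> {1..n+1}" and ne: "fB s \<noteq> fB t"
  shows "Bt_edge n s t \<longleftrightarrow> (fB s + 1 = fB t \<or> fB t + 1 = fB s)"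
proof
  assume "Bt_edge n s t"
  then consider "{s,t} = {1,3}" | "{s,t} = {2,3}" | k where "3 \<le> k" "k \<le> n" "{s,t} = {k,k+1}"
    unfolding Bt_edge_def by blast
  then show "fB s + 1 = fB t \<or> fB t + 1 = fB s"
    by cases (auto simp: doubleton_eq_iff fB_def)
next
  have dir: "Bt_edge n a b" if a: "a \<in> {1..n+1}" and b: "b \<in> {1..n+1}" and e: "fB a + 1 = fB b" for a b
  proof (cases "a \<le> 2")
    case True
    then have "fB b = 2" using e by (simp add: fB_def)
    then have "b = 3" by (auto simp: fB_def split: if_splits)
    then show ?thesis using True a unfolding Bt_edge_def by (auto simp: doubleton_eq_iff)
  next
    case False
    then have b3: "\<not> b \<le> 2" using e by (auto simp: fB_def)
    then have "b = a + 1" using e False by (auto simp: fB_def)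
    then show ?thesis using False b unfolding Bt_edge_def
      by (intro disjI2) (auto intro!: exI[of _ a])
  qed
  assume "fB s + 1 = fB t \<or> fB t + 1 = fB s"
  then show "Bt_edge n s t"
  proof
    assume "fB s + 1 = fB t" then show ?thesis using dir s t by blast
  next
    assume "fB t + 1 = fB s" then have "Bt_edge n t s" using dir s t by blast
    then show ?thesis unfolding Bt_edge_def by (auto simp: insert_commute)
  qed
qed

lemma fB_eq_n: "2 \<le> n \<Longrightarrow> s \<in> {1..n+1} \<Longrightarrow> fB s = n \<longleftrightarrow> s = n + 1"
  by (auto simp: fB_def)

lemma fB_range: "2 \<le> n \<Longrightarrow> s \<in> {1..n+1} \<Longrightarrow> fB s \<in> {1..n}"
  by (auto simp: fB_def)

lemma bt_mat_fB:
  assumes n: "2 \<le> n" and s: "s \<in> {1..n+1}" and t: "t \<in> {1..n+1}" and ne: "fB s \<noteq> fB t"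
  shows "B_mat n (fB s) (fB t) = Bt_mat n s t"
proof -
  have n1: "1 \<le> n" using n by simp
  have E: "Bt_edge n s t \<longleftrightarrow> (fB s + 1 = fB t \<or> fB t + 1 = fB s)" by (rule bt_edge_iff[OF n s t ne])
  have fs: "fB s \<in> {1..n}" and ft: "fB t \<in> {1..n}" using fB_range[OF n] s t by auto
  have ns: "fB s = n \<longleftrightarrow> s = n+1" and nt: "fB t = n \<longleftrightarrow> t = n+1" using fB_eq_n[OF n] s t by auto
  show ?thesis
  proof (cases "Bt_edge n s t")
    case True
    then have adj: "fB s + 1 = fB t \<or> fB t + 1 = fB s" using E by simp
    have "(n + 1 = s \<or> n + 1 = t) \<longleftrightarrow> ((fB s = n-1 \<and> fB t = n) \<or> (fB s = n \<and> fB t = n-1))"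
      using adj ns nt fs ft by auto
    then show ?thesis using True adj n1 by (simp add: Bt_mat_def B_mat_eq)
  next
    case False
    then have nadj: "\<not> (fB s + 1 = fB t \<or> fB t + 1 = fB s)" using E by simp
    then show ?thesis using False n1 by (auto simp: Bt_mat_def B_mat_eq)
  qed
qed

lemma tr_ok_ph1: "2 \<le> n \<Longrightarrow> tr_ok {1..n} (B_mat n) {1..n+1} (Bt_mat n) ph1 fB"
  unfolding tr_ok_def using bt_mat_fB fB_range by (auto simp: ph1_def fB_def)

lemma tr_ok_ph2: "2 \<le> n \<Longrightarrow> tr_ok {1..n} (B_mat n) {1..n+1} (Bt_mat n) ph2 fB"
  unfolding tr_ok_def using bt_mat_fB fB_range by (auto simp: ph2_def fB_def)

lemma eta_Bt_fB: "2 \<le> n \<Longrightarrow> \<forall>s\<in>{1..n+1}. eta_Bt n s = eta_B n (fB s)"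
  using fB_eq_n by (auto simp: eta_Bt_def eta_B_def)

lemma eta_inv_B: assumes n: "2 \<le> n" shows "eta_inv {1..n} (B_mat n) (eta_B n)"
proof -
  have n1: "1 \<le> n" using n by simp
  have odd: "\<forall>s\<in>{1..n}. \<forall>t\<in>{1..n}. s \<noteq> t \<longrightarrow> odd (B_mat n s t) \<longrightarrow> (s \<in> {n} \<longleftrightarrow> t \<in> {n})"
    using n1 by (auto simp: B_mat_eq split: if_splits)
  have eta: "\<forall>s\<in>{1..n}. eta_B n s = (if s \<in> {n} then - tv else - qv)" by (simp add: eta_B_def)
  show ?thesis unfolding eta_inv_def using reduced_prod_eq[OF odd eta] by blast
qed

lemma transport_B:
  assumes n: "2 \<le> n" and G: "\<Gamma> \<subseteq> {1..n}"
  shows "fin_type {1..n+1} (Bt_mat n) (ph1 ` \<Gamma>) \<and>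
         poincare {1..n+1} (Bt_mat n) (eta_Bt n) (ph1 ` \<Gamma>) = poincare {1..n} (B_mat n) (eta_B n) \<Gamma> \<and>
         fin_type {1..n+1} (Bt_mat n) (ph2 ` \<Gamma>) \<and>
         poincare {1..n+1} (Bt_mat n) (eta_Bt n) (ph2 ` \<Gamma>) = poincare {1..n} (B_mat n) (eta_B n) \<Gamma>"
  using transport[OF tr_ok_ph1[OF n] eta_Bt_fB[OF n] eta_inv_B[OF n] G]
    transport[OF tr_ok_ph2[OF n] eta_Bt_fB[OF n] eta_inv_B[OF n] G] B_fin_type[OF n G] by simp


lemma ph1_inj: "inj_on ph1 {1..n}" by (auto simp: inj_on_def ph1_def)
lemma ph2_inj: "inj_on ph2 {1..n}" by (auto simp: inj_on_def ph2_def)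

lemma ph1_mono: "a \<in> {1..n} \<Longrightarrow> b \<in> {1..n} \<Longrightarrow> ph1 a < ph1 b \<longleftrightarrow> a < b" by (auto simp: ph1_def)
lemma ph2_mono: "a \<in> {1..n} \<Longrightarrow> b \<in> {1..n} \<Longrightarrow> ph2 a < ph2 b \<longleftrightarrow> a < b" by (auto simp: ph2_def)

lemma ph1_range: "\<Gamma> \<subseteq> {1..n} \<Longrightarrow> ph1 ` \<Gamma> \<subseteq> {1..n+1}" by (auto simp: ph1_def)
lemma ph2_range: "\<Gamma> \<subseteq> {1..n} \<Longrightarrow> ph2 ` \<Gamma> \<subseteq> {1..n+1}" by (auto simp: ph2_def)

lemma fB_ph1: "1 \<le> a \<Longrightarrow> fB (ph1 a) = a" by (auto simp: ph1_def fB_def)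
lemma fB_ph2: "1 \<le> a \<Longrightarrow> fB (ph2 a) = a" by (auto simp: ph2_def fB_def)

lemma fB_ph1_img: "\<Gamma> \<subseteq> {1..n} \<Longrightarrow> fB ` ph1 ` \<Gamma> = \<Gamma>"
proof -
  assume G: "\<Gamma> \<subseteq> {1..n}"
  have "(\<lambda>a. fB (ph1 a)) ` \<Gamma> = (\<lambda>a. a) ` \<Gamma>"
  proof (rule image_cong)
    fix x assume "x \<in> \<Gamma>" then have "1 \<le> x" using G by auto
    then show "fB (ph1 x) = x" by (rule fB_ph1)
  qed simp
  then show ?thesis by (simp add: image_image)
qed
lemma fB_ph2_img: "\<Gamma> \<subseteq> {1..n} \<Longrightarrow> fB ` ph2 ` \<Gamma> = \<Gamma>"
proof -
  assume G: "\<Gamma> \<subseteq> {1..n}"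
  have "(\<lambda>a. fB (ph2 a)) ` \<Gamma> = (\<lambda>a. a) ` \<Gamma>"
  proof (rule image_cong)
    fix x assume "x \<in> \<Gamma>" then have "1 \<le> x" using G by auto
    then show "fB (ph2 x) = x" by (rule fB_ph2)
  qed simp
  then show ?thesis by (simp add: image_image)
qed

lemma ph1_ne2: "ph1 a \<noteq> 2" by (simp add: ph1_def)
lemma ph2_ne1: "1 \<le> a \<Longrightarrow> ph2 a \<noteq> 1" by (simp add: ph2_def)
lemma two_notin_ph1: "2 \<notin> ph1 ` \<Gamma>" using ph1_ne2 by (metis imageE)
lemma one_notin_ph2: "\<Gamma> \<subseteq> {1..n} \<Longrightarrow> 1 \<notin> ph2 ` \<Gamma>"
proof
  assume G: "\<Gamma> \<subseteq> {1..n}" and "1 \<in> ph2 ` \<Gamma>"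
  then obtain a where a: "a \<in> \<Gamma>" "ph2 a = 1" by auto
  then have "1 \<le> a" using G by auto
  then show False using a ph2_ne1 by simp
qed
lemma one_in_ph1: "\<Gamma> \<subseteq> {1..n} \<Longrightarrow> 1 \<in> ph1 ` \<Gamma> \<longleftrightarrow> 1 \<in> \<Gamma>"
proof
  assume G: "\<Gamma> \<subseteq> {1..n}" and "1 \<in> ph1 ` \<Gamma>"
  then obtain a where a: "a \<in> \<Gamma>" "ph1 a = 1" by auto
  then have "1 \<le> a" using G by auto
  then have "a = 1" using a by (cases "a = 1") (simp_all add: ph1_def)
  then show "1 \<in> \<Gamma>" using a by simp
next
  assume "1 \<in> \<Gamma>"
  then have "ph1 1 \<in> ph1 ` \<Gamma>" by (rule imageI)
  then show "1 \<in> ph1 ` \<Gamma>" by (simp add: ph1_def)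
qed

lemma two_in_ph2: "\<Gamma> \<subseteq> {1..n} \<Longrightarrow> 2 \<in> ph2 ` \<Gamma> \<longleftrightarrow> 1 \<in> \<Gamma>"
proof
  assume G: "\<Gamma> \<subseteq> {1..n}" and "2 \<in> ph2 ` \<Gamma>"
  then obtain a where a: "a \<in> \<Gamma>" "ph2 a = 2" by auto
  then have "a = 1" by (cases "a = 1") (simp_all add: ph2_def)
  then show "1 \<in> \<Gamma>" using a by simp
next
  assume "1 \<in> \<Gamma>"
  then have "ph2 1 \<in> ph2 ` \<Gamma>" by (rule imageI)
  then show "2 \<in> ph2 ` \<Gamma>" by (simp add: ph2_def)
qed

lemma ph12_eq: "1 \<notin> \<Gamma> \<Longrightarrow> ph1 ` \<Gamma> = ph2 ` \<Gamma>"
  by (rule image_cong) (auto simp: ph1_def ph2_def)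

lemma ph1_fB_img: "\<Delta> \<subseteq> {1..n+1} \<Longrightarrow> 2 \<notin> \<Delta> \<Longrightarrow> ph1 ` fB ` \<Delta> = \<Delta>"
proof -
  assume D: "\<Delta> \<subseteq> {1..n+1}" "2 \<notin> \<Delta>"
  have "ph1 (fB s) = s" if s: "s \<in> \<Delta>" for s
  proof -
    have "1 \<le> s" "s \<noteq> 2" using D s by auto
    then show ?thesis by (auto simp: ph1_def fB_def)
  qed
  then show ?thesis by (force simp: image_image)
qed

lemma ph2_fB_img: "\<Delta> \<subseteq> {1..n+1} \<Longrightarrow> 1 \<notin> \<Delta> \<Longrightarrow> ph2 ` fB ` \<Delta> = \<Delta>"
proof -
  assume D: "\<Delta> \<subseteq> {1..n+1}" "1 \<notin> \<Delta>"
  have "ph2 (fB s) = s" if s: "s \<in> \<Delta>" for s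
  proof -
    have "1 \<le> s" "s \<noteq> 1" using D s by auto
    then show ?thesis by (auto simp: ph2_def fB_def)
  qed
  then show ?thesis by (force simp: image_image)
qed

lemma fB_img_range: "2 \<le> n \<Longrightarrow> \<Delta> \<subseteq> {1..n+1} \<Longrightarrow> fB ` \<Delta> \<subseteq> {1..n}"
  using fB_range by blast

lemma one_in_fB: "2 \<in> \<Delta> \<Longrightarrow> 1 \<in> fB ` \<Delta>"
proof -
  assume "2 \<in> \<Delta>"
  then have "fB 2 \<in> fB ` \<Delta>" by (rule imageI)
  then show ?thesis by (simp add: fB_def)
qed

lemma sp_set: "\<Gamma> \<subseteq> {1..(n::nat)} \<Longrightarrow> {j \<in> \<Gamma>. 2 \<le> j} = \<Gamma> - {1}"
  by auto

lemma shift_plus_eq: "\<Gamma> \<subseteq> {1..(n::nat)} \<Longrightarrow> shift_plus \<Gamma> = (\<lambda>j. j + 1) ` (\<Gamma> - {1})"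
  unfolding shift_plus_def by (simp add: sp_set)

lemma ph1_minus: "ph1 ` (\<Gamma> - {1}) = (\<lambda>j. j + 1) ` (\<Gamma> - {1})"
  by (rule image_cong) (auto simp: ph1_def)
lemma ph2_minus: "ph2 ` (\<Gamma> - {1}) = (\<lambda>j. j + 1) ` (\<Gamma> - {1})"
  by (rule image_cong) (auto simp: ph2_def)

lemma shift_plus_ph1: "\<Gamma> \<subseteq> {1..n} \<Longrightarrow> 1 \<notin> \<Gamma> \<Longrightarrow> shift_plus \<Gamma> = ph1 ` \<Gamma>"
  using shift_plus_eq[of \<Gamma> n] ph1_minus[of \<Gamma>] by simp

lemma shift_plus_ins1: "\<Gamma> \<subseteq> {1..n} \<Longrightarrow> 1 \<in> \<Gamma> \<Longrightarrow> insert 1 (shift_plus \<Gamma>) = ph1 ` \<Gamma>"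
proof -
  assume G: "\<Gamma> \<subseteq> {1..n}" and one: "1 \<in> \<Gamma>"
  have "\<Gamma> = insert 1 (\<Gamma> - {1})" using one by auto
  then have "ph1 ` \<Gamma> = insert (ph1 1) (ph1 ` (\<Gamma> - {1}))" by (metis image_insert)
  then show ?thesis using shift_plus_eq[OF G] ph1_minus[of \<Gamma>] by (simp add: ph1_def)
qed

lemma shift_plus_ins2: "\<Gamma> \<subseteq> {1..n} \<Longrightarrow> 1 \<in> \<Gamma> \<Longrightarrow> insert 2 (shift_plus \<Gamma>) = ph2 ` \<Gamma>"
proof -
  assume G: "\<Gamma> \<subseteq> {1..n}" and one: "1 \<in> \<Gamma>"
  have "\<Gamma> = insert 1 (\<Gamma> - {1})" using one by auto
  then have "ph2 ` \<Gamma> = insert (ph2 1) (ph2 ` (\<Gamma> - {1}))" by (metis image_insert)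
  then show ?thesis using shift_plus_eq[OF G] ph2_minus[of \<Gamma>] by (simp add: ph2_def)
qed

lemma beta_e_eq: "\<Gamma> \<subseteq> {1..n} \<Longrightarrow>
   beta_e \<Gamma> \<Theta> = (if \<Theta> = ph1 ` \<Gamma> then 1 else 0) + (if 1 \<in> \<Gamma> \<and> \<Theta> = ph2 ` \<Gamma> then 1 else 0)"
proof -
  assume G: "\<Gamma> \<subseteq> {1..n}"
  show ?thesis
  proof (cases "1 \<in> \<Gamma>")
    case True
    have "beta_e \<Gamma> \<Theta> = ind (insert 1 (shift_plus \<Gamma>)) \<Theta> + ind (insert 2 (shift_plus \<Gamma>)) \<Theta>"
      using True by (simp add: beta_e_def)
    also have "\<dots> = ind (ph1 ` \<Gamma>) \<Theta> + ind (ph2 ` \<Gamma>) \<Theta>"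
      using shift_plus_ins1[OF G True] shift_plus_ins2[OF G True] by simp
    finally show ?thesis using True by (simp add: ind_def)
  next
    case False
    have "beta_e \<Gamma> \<Theta> = ind (shift_plus \<Gamma>) \<Theta>" using False by (simp add: beta_e_def)
    also have "\<dots> = ind (ph1 ` \<Gamma>) \<Theta>" using shift_plus_ph1[OF G False] by simp
    finally show ?thesis using False by (simp add: ind_def)
  qed
qed

lemma beta_e_eq2: "\<Gamma> \<subseteq> {1..n} \<Longrightarrow>
   beta_e \<Gamma> \<Theta> = (if \<Theta> = ph1 ` \<Gamma> \<or> (1 \<in> \<Gamma> \<and> \<Theta> = ph2 ` \<Gamma>) then 1 else 0)"
proof -
  assume G: "\<Gamma> \<subseteq> {1..n}"
  have "1 \<in> \<Gamma> \<Longrightarrow> ph1 ` \<Gamma> \<noteq> ph2 ` \<Gamma>" using one_in_ph1[OF G] one_notin_ph2[OF G] by metis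
  then show ?thesis using beta_e_eq[OF G, of \<Theta>] by auto
qed

definition condD :: "nat \<Rightarrow> nat set \<Rightarrow> bool" where
  "condD n \<Delta> \<longleftrightarrow> \<Delta> \<subseteq> {1..n+1} \<and> \<not> (1 \<in> \<Delta> \<and> 2 \<in> \<Delta>)"

lemma beta_e_char:
  assumes n: "2 \<le> n" and G: "\<Gamma> \<subseteq> {1..n}"
  shows "(\<Theta> = ph1 ` \<Gamma> \<or> (1 \<in> \<Gamma> \<and> \<Theta> = ph2 ` \<Gamma>)) \<longleftrightarrow> (condD n \<Theta> \<and> \<Gamma> = fB ` \<Theta>)"
proof
  assume "\<Theta> = ph1 ` \<Gamma> \<or> (1 \<in> \<Gamma> \<and> \<Theta> = ph2 ` \<Gamma>)"
  then show "condD n \<Theta> \<and> \<Gamma> = fB ` \<Theta>"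
  proof
    assume T: "\<Theta> = ph1 ` \<Gamma>"
    then show ?thesis using ph1_range[OF G] two_notin_ph1 fB_ph1_img[OF G] by (auto simp: condD_def)
  next
    assume T: "1 \<in> \<Gamma> \<and> \<Theta> = ph2 ` \<Gamma>"
    then show ?thesis using ph2_range[OF G] one_notin_ph2[OF G] fB_ph2_img[OF G] by (auto simp: condD_def)
  qed
next
  assume c: "condD n \<Theta> \<and> \<Gamma> = fB ` \<Theta>"
  then have T: "\<Theta> \<subseteq> {1..n+1}" by (simp add: condD_def)
  show "\<Theta> = ph1 ` \<Gamma> \<or> (1 \<in> \<Gamma> \<and> \<Theta> = ph2 ` \<Gamma>)"
  proof (cases "2 \<in> \<Theta>")
    case False
    then show ?thesis using ph1_fB_img[OF T] c by simp
  next
    case True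
    then have "1 \<notin> \<Theta>" using c by (simp add: condD_def)
    then show ?thesis using ph2_fB_img[OF T] c one_in_fB[OF True] by simp
  qed
qed

lemma beta_e_val:
  assumes n: "2 \<le> n" and G: "\<Gamma> \<subseteq> {1..n}"
  shows "beta_e \<Gamma> \<Theta> = (if condD n \<Theta> \<and> \<Gamma> = fB ` \<Theta> then 1 else 0)"
  using beta_e_eq2[OF G] beta_e_char[OF n G] by simp

lemma beta_sum_Pow:
  assumes n: "2 \<le> n"
  shows "(\<Sum>\<Gamma>\<in>Pow {1..n}. c \<Gamma> * beta_e \<Gamma> \<Delta>) = (if condD n \<Delta> then c (fB ` \<Delta>) else (0::R))"
proof -
  have "(\<Sum>\<Gamma>\<in>Pow {1..n}. c \<Gamma> * beta_e \<Gamma> \<Delta>) =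
        (\<Sum>\<Gamma>\<in>Pow {1..n}. if \<Gamma> = fB ` \<Delta> then (if condD n \<Delta> then c \<Gamma> else 0) else 0)"
    by (rule sum.cong) (auto simp: beta_e_val[OF n])
  also have "\<dots> = (if condD n \<Delta> then c (fB ` \<Delta>) else 0)"
  proof -
    have "condD n \<Delta> \<Longrightarrow> fB ` \<Delta> \<in> Pow {1..n}" using fB_img_range[OF n] by (auto simp: condD_def)
    then show ?thesis by (auto simp: sum.delta)
  qed
  finally show ?thesis .
qed

lemma beta_eval: "2 \<le> n \<Longrightarrow> beta n x \<Delta> = (if condD n \<Delta> then x (fB ` \<Delta>) else 0)"
  unfolding beta_def by (rule beta_sum_Pow)

lemma beta_sum_F:
  assumes "finite F" and G: "\<Gamma> \<subseteq> {1..n}"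
  shows "(\<Sum>\<Theta>\<in>F. beta_e \<Gamma> \<Theta> * h \<Theta>) =
     (if ph1 ` \<Gamma> \<in> F then h (ph1 ` \<Gamma>) else (0::R)) + (if 1 \<in> \<Gamma> \<and> ph2 ` \<Gamma> \<in> F then h (ph2 ` \<Gamma>) else 0)"
proof -
  have "(\<Sum>\<Theta>\<in>F. beta_e \<Gamma> \<Theta> * h \<Theta>) =
     (\<Sum>\<Theta>\<in>F. (if \<Theta> = ph1 ` \<Gamma> then h \<Theta> else 0) + (if 1 \<in> \<Gamma> \<and> \<Theta> = ph2 ` \<Gamma> then h \<Theta> else 0))"
    by (rule sum.cong) (auto simp: beta_e_eq[OF G] distrib_right)
  also have "\<dots> = (\<Sum>\<Theta>\<in>F. if \<Theta> = ph1 ` \<Gamma> then h \<Theta> else 0) + (\<Sum>\<Theta>\<in>F. if 1 \<in> \<Gamma> \<and> \<Theta> = ph2 ` \<Gamma> then h \<Theta> else 0)"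
    by (rule sum.distrib)
  also have "\<dots> = (if ph1 ` \<Gamma> \<in> F then h (ph1 ` \<Gamma>) else (0::R)) + (if 1 \<in> \<Gamma> \<and> ph2 ` \<Gamma> \<in> F then h (ph2 ` \<Gamma>) else 0)"
    using assms(1) by (cases "1 \<in> \<Gamma>") (simp_all add: sum.delta)
  finally show ?thesis .
qed


lemma coef_generic:
  assumes inj: "inj_on ph A" and mono: "\<forall>a\<in>A. \<forall>b\<in>A. ph a < ph b \<longleftrightarrow> a < b"
    and fin: "\<forall>\<Gamma>\<subseteq>A. fin_type S' m' (ph ` \<Gamma>) = fin_type A m \<Gamma>"
    and P: "\<forall>\<Gamma>\<subseteq>A. poincare S' m' \<eta>' (ph ` \<Gamma>) = poincare A m \<eta> \<Gamma>"
    and G: "\<Gamma> \<subseteq> A" and G': "\<Gamma>' \<subseteq> A"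
  shows "salvetti_coef S' m' \<eta>' (ph ` \<Gamma>) (ph ` \<Gamma>') = salvetti_coef A m \<eta> \<Gamma> \<Gamma>'"
proof -
  have sub: "ph ` \<Gamma> \<subseteq> ph ` \<Gamma>' \<longleftrightarrow> \<Gamma> \<subseteq> \<Gamma>'"
  proof
    assume h: "ph ` \<Gamma> \<subseteq> ph ` \<Gamma>'"
    show "\<Gamma> \<subseteq> \<Gamma>'"
    proof
      fix a assume a: "a \<in> \<Gamma>"
      then have "ph a \<in> ph ` \<Gamma>'" using h by auto
      then show "a \<in> \<Gamma>'" using inj_on_image_mem_iff[OF inj _ G'] a G by auto
    qed
  qed auto
  have diff: "ph ` \<Gamma>' - ph ` \<Gamma> = ph ` (\<Gamma>' - \<Gamma>)" using inj_on_image_set_diff[OF inj, of \<Gamma>' \<Gamma>] G G' by auto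
  have card: "card (ph ` (\<Gamma>' - \<Gamma>)) = card (\<Gamma>' - \<Gamma>)"
    using card_image[OF inj_on_subset[OF inj, of "\<Gamma>' - \<Gamma>"]] G' by auto
  show ?thesis
  proof (cases "fin_type A m \<Gamma> \<and> fin_type A m \<Gamma>' \<and> \<Gamma> \<subseteq> \<Gamma>' \<and> card (\<Gamma>' - \<Gamma>) = 1")
    case True
    then have "card (\<Gamma>' - \<Gamma>) = 1" by simp
    then obtain x where x: "\<Gamma>' - \<Gamma> = {x}" by (rule card_1_singletonE)
    have xA: "x \<in> A" using x G' by auto
    have te: "the_elem (ph ` \<Gamma>' - ph ` \<Gamma>) = ph x" using diff x by simp
    have al: "alpha (ph ` \<Gamma>) (ph x) = alpha \<Gamma> x"
    proof -
      have "{s \<in> ph ` \<Gamma>. s < ph x} = ph ` {s \<in> \<Gamma>. s < x}" using mono G xA by auto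
      moreover have "card (ph ` {s \<in> \<Gamma>. s < x}) = card {s \<in> \<Gamma>. s < x}"
        using card_image[OF inj_on_subset[OF inj, of "{s \<in> \<Gamma>. s < x}"]] G by auto
      ultimately show ?thesis by (simp add: alpha_def)
    qed
    show ?thesis using True sub diff card te al fin P G G' x by (simp add: salvetti_coef_def)
  next
    case False
    then show ?thesis using sub diff card fin G G' by (auto simp: salvetti_coef_def)
  qed
qed

lemma coef_ph1:
  assumes n: "2 \<le> n" and G: "\<Gamma> \<subseteq> {1..n}" and G': "\<Gamma>' \<subseteq> {1..n}"
  shows "salvetti_coef {1..n+1} (Bt_mat n) (eta_Bt n) (ph1 ` \<Gamma>) (ph1 ` \<Gamma>') =
         salvetti_coef {1..n} (B_mat n) (eta_B n) \<Gamma> \<Gamma>'"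
proof (rule coef_generic[OF ph1_inj _ _ _ G G'])
  show "\<forall>a\<in>{1..n}. \<forall>b\<in>{1..n}. ph1 a < ph1 b \<longleftrightarrow> a < b" using ph1_mono by blast
qed (use transport_B[OF n] B_fin_type[OF n] in auto)

lemma coef_ph2:
  assumes n: "2 \<le> n" and G: "\<Gamma> \<subseteq> {1..n}" and G': "\<Gamma>' \<subseteq> {1..n}"
  shows "salvetti_coef {1..n+1} (Bt_mat n) (eta_Bt n) (ph2 ` \<Gamma>) (ph2 ` \<Gamma>') =
         salvetti_coef {1..n} (B_mat n) (eta_B n) \<Gamma> \<Gamma>'"
proof (rule coef_generic[OF ph2_inj _ _ _ G G'])
  show "\<forall>a\<in>{1..n}. \<forall>b\<in>{1..n}. ph2 a < ph2 b \<longleftrightarrow> a < b" using ph2_mono by blast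
qed (use transport_B[OF n] B_fin_type[OF n] in auto)

lemma coef_notsub: "\<not> \<Theta> \<subseteq> \<Delta> \<Longrightarrow> salvetti_coef S m \<eta> \<Theta> \<Delta> = 0"
  by (simp add: salvetti_coef_def)

lemma coef_notS: "\<not> \<Delta> \<subseteq> S \<Longrightarrow> salvetti_coef S m \<eta> \<Theta> \<Delta> = 0"
  by (simp add: salvetti_coef_def fin_type_def)

lemma coef_card: "card (\<Delta> - \<Theta>) \<noteq> 1 \<Longrightarrow> salvetti_coef S m \<eta> \<Theta> \<Delta> = 0"
  by (simp add: salvetti_coef_def)

lemma coef_insert: "x \<notin> \<Theta> \<Longrightarrow> salvetti_coef S m \<eta> \<Theta> (insert x \<Theta>) =
   (if fin_type S m \<Theta> \<and> fin_type S m (insert x \<Theta>) then (-1) ^ alpha \<Theta> x *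
      rdiv (poincare S m \<eta> (insert x \<Theta>)) (poincare S m \<eta> \<Theta>) else 0)"
proof -
  assume x: "x \<notin> \<Theta>"
  have "insert x \<Theta> - \<Theta> = {x}" using x by auto
  then show ?thesis by (auto simp: salvetti_coef_def)
qed


definition ct :: "nat \<Rightarrow> nat set \<Rightarrow> nat set \<Rightarrow> R" where
  "ct n \<Theta> \<Delta> = salvetti_coef {1..n+1} (Bt_mat n) (eta_Bt n) \<Theta> \<Delta>"
definition cb :: "nat \<Rightarrow> nat set \<Rightarrow> nat set \<Rightarrow> R" where
  "cb n \<Gamma> \<Gamma>' = salvetti_coef {1..n} (B_mat n) (eta_B n) \<Gamma> \<Gamma>'"
definition PT :: "nat \<Rightarrow> nat set \<Rightarrow> R" where
  "PT n \<Theta> = poincare (St n) (Bt_mat n) (eta_Bt n) \<Theta>"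
definition gt :: "nat \<Rightarrow> nat set \<Rightarrow> R" where
  "gt n \<Theta> = (-1) ^ alpha \<Theta> (the_elem (St n - \<Theta>)) * rdiv (What n) (PT n \<Theta>)"
definition F2 :: "nat \<Rightarrow> nat set set" where
  "F2 n = {\<Theta>. \<Theta> \<subseteq> St n \<and> card \<Theta> = n}"

lemma card_ph1: "\<Gamma> \<subseteq> {1..n} \<Longrightarrow> card (ph1 ` \<Gamma>) = card \<Gamma>"
  using card_image[OF inj_on_subset[OF ph1_inj]] by blast
lemma card_ph2: "\<Gamma> \<subseteq> {1..n} \<Longrightarrow> card (ph2 ` \<Gamma>) = card \<Gamma>"
  using card_image[OF inj_on_subset[OF ph2_inj]] by blast

lemma F2_ph1: "\<Gamma> \<subseteq> {1..n} \<Longrightarrow> ph1 ` \<Gamma> \<in> F2 n \<longleftrightarrow> \<Gamma> = {1..n}"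
proof -
  assume G: "\<Gamma> \<subseteq> {1..n}"
  have "card \<Gamma> = n \<longleftrightarrow> \<Gamma> = {1..n}"
    using card_subset_eq[OF finite_atLeastAtMost G] by auto
  then show ?thesis using card_ph1[OF G] ph1_range[OF G] by (auto simp: F2_def)
qed
lemma F2_ph2: "\<Gamma> \<subseteq> {1..n} \<Longrightarrow> ph2 ` \<Gamma> \<in> F2 n \<longleftrightarrow> \<Gamma> = {1..n}"
proof -
  assume G: "\<Gamma> \<subseteq> {1..n}"
  have "card \<Gamma> = n \<longleftrightarrow> \<Gamma> = {1..n}"
    using card_subset_eq[OF finite_atLeastAtMost G] by auto
  then show ?thesis using card_ph2[OF G] ph2_range[OF G] by (auto simp: F2_def)
qed

lemma ph1_A: "2 \<le> n \<Longrightarrow> ph1 ` {1..n} = St n - {2}"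
proof
  show "ph1 ` {1..n} \<subseteq> St n - {2}" using ph1_range[of "{1..n}" n] ph1_ne2 by auto
  assume n: "2 \<le> n"
  show "St n - {2} \<subseteq> ph1 ` {1..n}"
  proof
    fix s assume s: "s \<in> St n - {2}"
    then have "ph1 ` fB ` {s} = {s}" using ph1_fB_img[of "{s}" n] by auto
    then have e: "ph1 (fB s) = s" by simp
    have "fB s \<in> {1..n}" using fB_range[OF n] s by auto
    then have "ph1 (fB s) \<in> ph1 ` {1..n}" by (rule imageI)
    then show "s \<in> ph1 ` {1..n}" using e by simp
  qed
qed

lemma ph2_A: "2 \<le> n \<Longrightarrow> ph2 ` {1..n} = St n - {1}"
proof
  assume n: "2 \<le> n"
  have "1 \<notin> ph2 ` {1..n}" by (rule one_notin_ph2[of _ n]) simp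
  then show "ph2 ` {1..n} \<subseteq> St n - {1}" using ph2_range[of "{1..n}" n] by blast
  show "St n - {1} \<subseteq> ph2 ` {1..n}"
  proof
    fix s assume s: "s \<in> St n - {1}"
    then have "ph2 ` fB ` {s} = {s}" using ph2_fB_img[of "{s}" n] by auto
    then have e: "ph2 (fB s) = s" by simp
    have "fB s \<in> {1..n}" using fB_range[OF n] s by auto
    then have "ph2 (fB s) \<in> ph2 ` {1..n}" by (rule imageI)
    then show "s \<in> ph2 ` {1..n}" using e by simp
  qed
qed

lemma PT_eq: "2 \<le> n \<Longrightarrow> \<Gamma> \<subseteq> {1..n} \<Longrightarrow> PT n (ph1 ` \<Gamma>) = PT n (ph2 ` \<Gamma>)"
  using transport_B unfolding PT_def by simp

lemma fin_ph: "2 \<le> n \<Longrightarrow> \<Gamma> \<subseteq> {1..n} \<Longrightarrow>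
   fin_type (St n) (Bt_mat n) (ph1 ` \<Gamma>) \<and> fin_type (St n) (Bt_mat n) (ph2 ` \<Gamma>)"
  using transport_B by simp

lemma top_zero:
  assumes n: "2 \<le> n" and G: "\<Gamma> \<subseteq> {1..n}"
  shows "(if ph1 ` \<Gamma> \<in> F2 n then gt n (ph1 ` \<Gamma>) else 0) +
         (if 1 \<in> \<Gamma> \<and> ph2 ` \<Gamma> \<in> F2 n then gt n (ph2 ` \<Gamma>) else 0) = 0"
proof (cases "\<Gamma> = {1..n}")
  case False
  then show ?thesis using F2_ph1[OF G] F2_ph2[OF G] by simp
next
  case True
  have one: "1 \<in> \<Gamma>" using True n by simp
  have e1: "St n - ph1 ` \<Gamma> = {2}" using True ph1_A[OF n] n by auto
  have e2: "St n - ph2 ` \<Gamma> = {1}" using True ph2_A[OF n] n by auto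
  have a1: "alpha (ph1 ` \<Gamma>) 2 = 1"
  proof -
    have "{s \<in> ph1 ` \<Gamma>. s < 2} = {1}" using True ph1_A[OF n] n by auto
    then show ?thesis by (simp add: alpha_def)
  qed
  have a2: "alpha (ph2 ` \<Gamma>) 1 = 0"
  proof -
    have "{s \<in> ph2 ` \<Gamma>. s < 1} = {}" using ph2_range[OF G] by auto
    then show ?thesis by (simp add: alpha_def)
  qed
  show ?thesis using True F2_ph1[OF G] F2_ph2[OF G] one e1 e2 a1 a2 PT_eq[OF n G]
    by (simp add: gt_def)
qed

lemma key:
  assumes n: "2 \<le> n" and G: "\<Gamma> \<subseteq> {1..n}"
  shows "(if condD n \<Delta> then cb n \<Gamma> (fB ` \<Delta>) else 0) =
    ct n (ph1 ` \<Gamma>) \<Delta> + (if 1 \<in> \<Gamma> then ct n (ph2 ` \<Gamma>) \<Delta> else 0) +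
    (if \<Delta> = St n then (if ph1 ` \<Gamma> \<in> F2 n then gt n (ph1 ` \<Gamma>) else 0) +
        (if 1 \<in> \<Gamma> \<and> ph2 ` \<Gamma> \<in> F2 n then gt n (ph2 ` \<Gamma>) else 0) else 0)"
proof -
  let ?top = "(if \<Delta> = St n then (if ph1 ` \<Gamma> \<in> F2 n then gt n (ph1 ` \<Gamma>) else 0) +
        (if 1 \<in> \<Gamma> \<and> ph2 ` \<Gamma> \<in> F2 n then gt n (ph2 ` \<Gamma>) else 0) else 0)"
  have top: "?top = 0" using top_zero[OF n G] by simp
  have S12: "1 \<in> St n" "2 \<in> St n" using n by auto
  consider (C3) "\<not> \<Delta> \<subseteq> St n" | (C1) "\<Delta> \<subseteq> St n" "2 \<notin> \<Delta>" | (C2) "\<Delta> \<subseteq> St n" "2 \<in> \<Delta>" "1 \<notin> \<Delta>"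
    | (C4) "\<Delta> \<subseteq> St n" "1 \<in> \<Delta>" "2 \<in> \<Delta>" by blast
  then show ?thesis
  proof cases
    case C3
    then show ?thesis using top by (simp add: condD_def ct_def coef_notS)
  next
    case C1
    let ?G0 = "fB ` \<Delta>"
    have G0: "?G0 \<subseteq> {1..n}" using fB_img_range[OF n C1(1)] .
    have D: "ph1 ` ?G0 = \<Delta>" using ph1_fB_img[OF C1] .
    have c: "condD n \<Delta>" using C1 by (simp add: condD_def)
    have "cb n \<Gamma> ?G0 = ct n (ph1 ` \<Gamma>) \<Delta>" using coef_ph1[OF n G G0] D by (simp add: cb_def ct_def)
    moreover have "1 \<in> \<Gamma> \<Longrightarrow> ct n (ph2 ` \<Gamma>) \<Delta> = 0"
      using two_in_ph2[OF G] C1 by (auto simp: ct_def intro!: coef_notsub)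
    ultimately show ?thesis using top c by simp
  next
    case C2
    let ?G0 = "fB ` \<Delta>"
    have G0: "?G0 \<subseteq> {1..n}" using fB_img_range[OF n C2(1)] .
    have D: "ph2 ` ?G0 = \<Delta>" using ph2_fB_img[OF C2(1) C2(3)] .
    have c: "condD n \<Delta>" using C2 by (simp add: condD_def)
    have e: "cb n \<Gamma> ?G0 = ct n (ph2 ` \<Gamma>) \<Delta>" using coef_ph2[OF n G G0] D by (simp add: cb_def ct_def)
    show ?thesis
    proof (cases "1 \<in> \<Gamma>")
      case True
      have "ct n (ph1 ` \<Gamma>) \<Delta> = 0"
        using one_in_ph1[OF G] True C2 by (auto simp: ct_def intro!: coef_notsub)
      then show ?thesis using e top c True by simp
    next
      case False
      then show ?thesis using e top c ph12_eq[OF False] by simp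
    qed
  next
    case C4
    have c: "\<not> condD n \<Delta>" using C4 by (simp add: condD_def)
    show ?thesis
    proof (cases "1 \<in> \<Gamma>")
      case False
      have "ct n (ph1 ` \<Gamma>) \<Delta> = 0"
      proof (cases "ph1 ` \<Gamma> \<subseteq> \<Delta>")
        case True
        have "{1,2} \<subseteq> \<Delta> - ph1 ` \<Gamma>" using C4 one_in_ph1[OF G] False two_notin_ph1 by auto
        moreover have "finite (\<Delta> - ph1 ` \<Gamma>)" using C4(1) finite_subset by auto
        ultimately have "2 \<le> card (\<Delta> - ph1 ` \<Gamma>)" using card_mono[of "\<Delta> - ph1 ` \<Gamma>" "{1,2}"] by simp
        then show ?thesis by (simp add: ct_def coef_card)
      qed (simp add: ct_def coef_notsub)
      then show ?thesis using c top False by simp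
    next
      case True
      let ?E = "insert 2 (ph1 ` \<Gamma>)"
      have E2: "insert 1 (ph2 ` \<Gamma>) = ?E"
        using shift_plus_ins1[OF G True] shift_plus_ins2[OF G True] by auto
      have "ct n (ph1 ` \<Gamma>) \<Delta> + ct n (ph2 ` \<Gamma>) \<Delta> = 0"
      proof (cases "\<Delta> = ?E")
        case False
        have z1: "ct n (ph1 ` \<Gamma>) \<Delta> = 0"
        proof (cases "ph1 ` \<Gamma> \<subseteq> \<Delta> \<and> card (\<Delta> - ph1 ` \<Gamma>) = 1")
          case True
          then have "card (\<Delta> - ph1 ` \<Gamma>) = 1" by simp
          then obtain y where y: "\<Delta> - ph1 ` \<Gamma> = {y}" by (rule card_1_singletonE)
          have "2 \<in> \<Delta> - ph1 ` \<Gamma>" using C4 two_notin_ph1 by auto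
          then have "\<Delta> = ?E" using y True by auto
          then show ?thesis using False by simp
        next
          case False
          then show ?thesis by (auto simp: ct_def salvetti_coef_def)
        qed
        have z2: "ct n (ph2 ` \<Gamma>) \<Delta> = 0"
        proof (cases "ph2 ` \<Gamma> \<subseteq> \<Delta> \<and> card (\<Delta> - ph2 ` \<Gamma>) = 1")
          case True
          then have "card (\<Delta> - ph2 ` \<Gamma>) = 1" by simp
          then obtain y where y: "\<Delta> - ph2 ` \<Gamma> = {y}" by (rule card_1_singletonE)
          have "1 \<in> \<Delta> - ph2 ` \<Gamma>" using C4 one_notin_ph2[OF G] by auto
          then have "\<Delta> = insert 1 (ph2 ` \<Gamma>)" using y True by auto
          then show ?thesis using False E2 by simp
        next
          case False
          then show ?thesis by (auto simp: ct_def salvetti_coef_def)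
        qed
        show ?thesis using z1 z2 by simp
      next
        case DE: True
        have i1: "ct n (ph1 ` \<Gamma>) ?E = (if fin_type (St n) (Bt_mat n) (ph1 ` \<Gamma>) \<and> fin_type (St n) (Bt_mat n) ?E
            then (-1) ^ alpha (ph1 ` \<Gamma>) 2 * rdiv (PT n ?E) (PT n (ph1 ` \<Gamma>)) else 0)"
          unfolding ct_def PT_def by (rule coef_insert[OF two_notin_ph1])
        have i2: "ct n (ph2 ` \<Gamma>) ?E = (if fin_type (St n) (Bt_mat n) (ph2 ` \<Gamma>) \<and> fin_type (St n) (Bt_mat n) ?E
            then (-1) ^ alpha (ph2 ` \<Gamma>) 1 * rdiv (PT n ?E) (PT n (ph2 ` \<Gamma>)) else 0)"
          unfolding ct_def PT_def E2[symmetric] by (rule coef_insert[OF one_notin_ph2[OF G]])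
        have a1: "alpha (ph1 ` \<Gamma>) 2 = 1"
        proof -
          have "{s \<in> ph1 ` \<Gamma>. s < 2} = {1}"
            using one_in_ph1[OF G] True ph1_range[OF G] by fastforce
          then show ?thesis by (simp add: alpha_def)
        qed
        have a2: "alpha (ph2 ` \<Gamma>) 1 = 0"
        proof -
          have "{s \<in> ph2 ` \<Gamma>. s < 1} = {}" using ph2_range[OF G] by auto
          then show ?thesis by (simp add: alpha_def)
        qed
        show ?thesis using DE i1 i2 a1 a2 fin_ph[OF n G] PT_eq[OF n G] by simp
      qed
      then show ?thesis using c top True by simp
    qed
  qed
qed


definition sw :: "nat \<Rightarrow> nat" where "sw i = (if i = 1 then 2 else if i = 2 then 1 else i)"

lemma sw_sw[simp]: "sw (sw i) = i" by (simp add: sw_def)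
lemma swap12_sw: "swap12 X = sw ` X" by (simp add: swap12_def sw_def)
lemma swap12_mem: "k \<in> swap12 X \<longleftrightarrow> sw k \<in> X"
  unfolding swap12_sw by (metis image_iff sw_sw)
lemma swap12_swap12[simp]: "swap12 (swap12 X) = X"
  by (auto simp: swap12_mem)
lemma swap12_eq_iff: "\<Delta> = swap12 \<Gamma> \<longleftrightarrow> \<Gamma> = swap12 \<Delta>" by auto
lemma one_swap: "1 \<in> swap12 X \<longleftrightarrow> 2 \<in> X" by (simp add: swap12_mem sw_def)
lemma two_swap: "2 \<in> swap12 X \<longleftrightarrow> 1 \<in> X" by (simp add: swap12_mem sw_def)
lemma swap12_sub: "1 \<le> n \<Longrightarrow> X \<subseteq> St n \<Longrightarrow> swap12 X \<subseteq> St n"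
  unfolding swap12_sw sw_def by auto
lemma one_swap': "Suc 0 \<in> swap12 X \<longleftrightarrow> 2 \<in> X" using one_swap by simp
lemma two_swap': "2 \<in> swap12 X \<longleftrightarrow> Suc 0 \<in> X" using two_swap by simp

lemma swap12_ne: "(1 \<in> X) \<noteq> (2 \<in> X) \<Longrightarrow> swap12 X \<noteq> X"
  using one_swap[of X] by auto

lemma fB_swap12: "fB ` swap12 X = fB ` X"
proof -
  have "fB ` sw ` X = (\<lambda>i. fB (sw i)) ` X" by (simp add: image_image)
  also have "\<dots> = fB ` X" by (rule image_cong) (auto simp: sw_def fB_def)
  finally show ?thesis by (simp add: swap12_sw)
qed

lemma sigma_eval:
  assumes n: "1 \<le> n" and D: "\<Delta> \<subseteq> St n"
  shows "sigma n y \<Delta> = (if 1 \<in> \<Delta> \<and> 2 \<in> \<Delta> then - y \<Delta> else if 1 \<notin> \<Delta> \<and> 2 \<notin> \<Delta> then y \<Delta>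
     else y (swap12 \<Delta>))"
proof -
  define T where "T = (if 1 \<in> \<Delta> \<and> 2 \<in> \<Delta> then \<Delta> else if 1 \<notin> \<Delta> \<and> 2 \<notin> \<Delta> then \<Delta> else swap12 \<Delta>)"
  define c :: R where "c = (if 1 \<in> \<Delta> \<and> 2 \<in> \<Delta> then -1 else 1)"
  have se: "sigma_e \<Gamma> \<Delta> = (if \<Gamma> = T then c else 0)" for \<Gamma>
  proof -
    consider (a) "1 \<notin> \<Gamma> \<and> 2 \<notin> \<Gamma>" | (b) "1 \<in> \<Gamma> \<and> 2 \<in> \<Gamma>" | (c) "(1 \<in> \<Gamma>) \<noteq> (2 \<in> \<Gamma>)" by blast
    then show ?thesis
    proof cases
      case a
      then show ?thesis unfolding sigma_e_def ind_def T_def c_def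
        by (auto simp: one_swap two_swap one_swap' two_swap')
    next
      case b
      then show ?thesis unfolding sigma_e_def ind_def T_def c_def
        by (auto simp: one_swap two_swap one_swap' two_swap')
    next
      case c
      have "(1 \<in> \<Delta>) \<noteq> (2 \<in> \<Delta>) \<Longrightarrow> swap12 \<Delta> \<noteq> \<Delta>" by (rule swap12_ne)
      then show ?thesis using c unfolding sigma_e_def ind_def T_def c_def
        by (auto simp: one_swap two_swap one_swap' two_swap')
    qed
  qed
  have TS: "T \<in> Pow (St n)" using D swap12_sub[OF n D] by (auto simp: T_def)
  have "sigma n y \<Delta> = (\<Sum>\<Gamma>\<in>Pow (St n). if \<Gamma> = T then y \<Gamma> * c else 0)"
    unfolding sigma_def by (rule sum.cong) (auto simp: se)
  also have "\<dots> = y T * c" using TS by (simp add: sum.delta)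
  finally show ?thesis by (auto simp: T_def c_def)
qed

lemma sigma_out: "\<not> \<Delta> \<subseteq> St n \<Longrightarrow> 1 \<le> n \<Longrightarrow> sigma n y \<Delta> = 0"
proof -
  assume D: "\<not> \<Delta> \<subseteq> St n" and n: "1 \<le> n"
  have "sigma_e \<Gamma> \<Delta> = 0" if G: "\<Gamma> \<subseteq> St n" for \<Gamma>
  proof -
    have "\<Delta> \<noteq> \<Gamma>" using D G by auto
    moreover have "\<Delta> \<noteq> swap12 \<Gamma>" using D swap12_sub[OF n G] by auto
    ultimately show ?thesis by (simp add: sigma_e_def ind_def)
  qed
  then show ?thesis unfolding sigma_def by (simp add: sum.neutral)
qed

lemma swap_sum:
  fixes x :: "nat set \<Rightarrow> R"
  shows "(\<Sum>\<Theta>\<in>F. (\<Sum>\<Gamma>\<in>P. x \<Gamma> * b \<Gamma> \<Theta>) * h \<Theta>) = (\<Sum>\<Gamma>\<in>P. x \<Gamma> * (\<Sum>\<Theta>\<in>F. b \<Gamma> \<Theta> * h \<Theta>))"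
proof -
  have "(\<Sum>\<Theta>\<in>F. (\<Sum>\<Gamma>\<in>P. x \<Gamma> * b \<Gamma> \<Theta>) * h \<Theta>) = (\<Sum>\<Theta>\<in>F. \<Sum>\<Gamma>\<in>P. x \<Gamma> * (b \<Gamma> \<Theta> * h \<Theta>))"
    by (simp add: sum_distrib_right mult.assoc)
  also have "\<dots> = (\<Sum>\<Gamma>\<in>P. \<Sum>\<Theta>\<in>F. x \<Gamma> * (b \<Gamma> \<Theta> * h \<Theta>))" by (rule sum.swap)
  also have "\<dots> = (\<Sum>\<Gamma>\<in>P. x \<Gamma> * (\<Sum>\<Theta>\<in>F. b \<Gamma> \<Theta> * h \<Theta>))" by (simp add: sum_distrib_left)
  finally show ?thesis .
qed

lemma finset_B: "2 \<le> n \<Longrightarrow> {\<Gamma>. fin_type {1..n} (B_mat n) \<Gamma>} = Pow {1..n}"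
  using B_fin_type by (auto simp: fin_type_def)

lemma chain_map:
  assumes n: "2 \<le> n" and x: "x \<in> cochains {1..n} (B_mat n)"
  shows "beta n (salvetti_d {1..n} (B_mat n) (eta_B n) x) \<Delta> = dhat n (beta n x) \<Delta>"
proof -
  let ?A = "Pow {1..n}"
  let ?FT = "{\<Theta>. fin_type (St n) (Bt_mat n) \<Theta>}"
  have finFT: "finite ?FT" by (rule finite_subset[of _ "Pow (St n)"]) (auto simp: fin_type_def)
  have finF2: "finite (F2 n)" by (rule finite_subset[of _ "Pow (St n)"]) (auto simp: F2_def)
  have L: "beta n (salvetti_d {1..n} (B_mat n) (eta_B n) x) \<Delta> =
      (\<Sum>\<Gamma>\<in>?A. x \<Gamma> * (if condD n \<Delta> then cb n \<Gamma> (fB ` \<Delta>) else 0))"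
  proof -
    have fs: "Collect (fin_type {1..n} (B_mat n)) = Pow {1..n}" using finset_B[OF n] by simp
    show ?thesis unfolding beta_eval[OF n] salvetti_d_def fs cb_def by (simp add: sum.neutral)
  qed
  have R1: "salvetti_d (St n) (Bt_mat n) (eta_Bt n) (beta n x) \<Delta> =
      (\<Sum>\<Gamma>\<in>?A. x \<Gamma> * (ct n (ph1 ` \<Gamma>) \<Delta> + (if 1 \<in> \<Gamma> then ct n (ph2 ` \<Gamma>) \<Delta> else 0)))"
  proof -
    have "salvetti_d (St n) (Bt_mat n) (eta_Bt n) (beta n x) \<Delta> =
        (\<Sum>\<Theta>\<in>?FT. (\<Sum>\<Gamma>\<in>?A. x \<Gamma> * beta_e \<Gamma> \<Theta>) * ct n \<Theta> \<Delta>)"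
      by (simp add: salvetti_d_def beta_def ct_def)
    also have "\<dots> = (\<Sum>\<Gamma>\<in>?A. x \<Gamma> * (\<Sum>\<Theta>\<in>?FT. beta_e \<Gamma> \<Theta> * ct n \<Theta> \<Delta>))" by (rule swap_sum)
    also have "\<dots> = (\<Sum>\<Gamma>\<in>?A. x \<Gamma> * (ct n (ph1 ` \<Gamma>) \<Delta> + (if 1 \<in> \<Gamma> then ct n (ph2 ` \<Gamma>) \<Delta> else 0)))"
    proof (rule sum.cong[OF HOL.refl])
      fix \<Gamma> assume "\<Gamma> \<in> ?A"
      then have G: "\<Gamma> \<subseteq> {1..n}" by simp
      show "x \<Gamma> * (\<Sum>\<Theta>\<in>?FT. beta_e \<Gamma> \<Theta> * ct n \<Theta> \<Delta>) =
          x \<Gamma> * (ct n (ph1 ` \<Gamma>) \<Delta> + (if 1 \<in> \<Gamma> then ct n (ph2 ` \<Gamma>) \<Delta> else 0))"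
        using beta_sum_F[OF finFT G, of "\<lambda>\<Theta>. ct n \<Theta> \<Delta>"] fin_ph[OF n G] by simp
    qed
    finally show ?thesis .
  qed
  have R2: "(\<Sum>\<Theta>\<in>{\<Gamma>. \<Gamma> \<subseteq> St n \<and> card \<Gamma> = n}. beta n x \<Theta> * ((-1) ^ alpha \<Theta> (the_elem (St n - \<Theta>)) *
                   rdiv (What n) (poincare (St n) (Bt_mat n) (eta_Bt n) \<Theta>))) =
      (\<Sum>\<Gamma>\<in>?A. x \<Gamma> * ((if ph1 ` \<Gamma> \<in> F2 n then gt n (ph1 ` \<Gamma>) else 0) +
        (if 1 \<in> \<Gamma> \<and> ph2 ` \<Gamma> \<in> F2 n then gt n (ph2 ` \<Gamma>) else 0)))"
  proof -
    have "(\<Sum>\<Theta>\<in>{\<Gamma>. \<Gamma> \<subseteq> St n \<and> card \<Gamma> = n}. beta n x \<Theta> * ((-1) ^ alpha \<Theta> (the_elem (St n - \<Theta>)) *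
                   rdiv (What n) (poincare (St n) (Bt_mat n) (eta_Bt n) \<Theta>))) =
        (\<Sum>\<Theta>\<in>F2 n. (\<Sum>\<Gamma>\<in>?A. x \<Gamma> * beta_e \<Gamma> \<Theta>) * gt n \<Theta>)"
      by (simp add: F2_def gt_def PT_def beta_def)
    also have "\<dots> = (\<Sum>\<Gamma>\<in>?A. x \<Gamma> * (\<Sum>\<Theta>\<in>F2 n. beta_e \<Gamma> \<Theta> * gt n \<Theta>))" by (rule swap_sum)
    also have "\<dots> = (\<Sum>\<Gamma>\<in>?A. x \<Gamma> * ((if ph1 ` \<Gamma> \<in> F2 n then gt n (ph1 ` \<Gamma>) else 0) +
        (if 1 \<in> \<Gamma> \<and> ph2 ` \<Gamma> \<in> F2 n then gt n (ph2 ` \<Gamma>) else 0)))"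
    proof (rule sum.cong[OF HOL.refl])
      fix \<Gamma> assume "\<Gamma> \<in> ?A"
      then have G: "\<Gamma> \<subseteq> {1..n}" by simp
      show "x \<Gamma> * (\<Sum>\<Theta>\<in>F2 n. beta_e \<Gamma> \<Theta> * gt n \<Theta>) = x \<Gamma> * ((if ph1 ` \<Gamma> \<in> F2 n then gt n (ph1 ` \<Gamma>) else 0) +
        (if 1 \<in> \<Gamma> \<and> ph2 ` \<Gamma> \<in> F2 n then gt n (ph2 ` \<Gamma>) else 0))"
        using beta_sum_F[OF finF2 G, of "gt n"] by simp
    qed
    finally show ?thesis .
  qed
  have "dhat n (beta n x) \<Delta> = (\<Sum>\<Gamma>\<in>?A. x \<Gamma> * (ct n (ph1 ` \<Gamma>) \<Delta> + (if 1 \<in> \<Gamma> then ct n (ph2 ` \<Gamma>) \<Delta> else 0) +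
    (if \<Delta> = St n then (if ph1 ` \<Gamma> \<in> F2 n then gt n (ph1 ` \<Gamma>) else 0) +
        (if 1 \<in> \<Gamma> \<and> ph2 ` \<Gamma> \<in> F2 n then gt n (ph2 ` \<Gamma>) else 0) else 0)))"
    unfolding dhat_def R1 using R2 by (simp add: sum.distrib distrib_left)
  also have "\<dots> = (\<Sum>\<Gamma>\<in>?A. x \<Gamma> * (if condD n \<Delta> then cb n \<Gamma> (fB ` \<Delta>) else 0))"
    by (rule sum.cong[OF HOL.refl]) (simp add: key[OF n])
  finally show ?thesis using L by simp
qed


lemma cochains_zero: "2 \<le> n \<Longrightarrow> x \<in> cochains {1..n} (B_mat n) \<Longrightarrow> \<not> \<Gamma> \<subseteq> {1..n} \<Longrightarrow> x \<Gamma> = 0"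
  by (auto simp: cochains_def fin_type_def)

lemma condD_ph1: "\<Gamma> \<subseteq> {1..n} \<Longrightarrow> condD n (ph1 ` \<Gamma>)"
  using ph1_range two_notin_ph1 by (auto simp: condD_def)

lemma beta_inj:
  assumes n: "2 \<le> n"
  shows "inj_on (beta n) (cochains {1..n} (B_mat n))"
proof (rule inj_onI)
  fix x y assume x: "x \<in> cochains {1..n} (B_mat n)" and y: "y \<in> cochains {1..n} (B_mat n)"
    and e: "beta n x = beta n y"
  show "x = y"
  proof
    fix \<Gamma>
    show "x \<Gamma> = y \<Gamma>"
    proof (cases "\<Gamma> \<subseteq> {1..n}")
      case True
      have "beta n x (ph1 ` \<Gamma>) = beta n y (ph1 ` \<Gamma>)" using e by simp
      then show ?thesis using beta_eval[OF n] condD_ph1[OF True] fB_ph1_img[OF True] by simp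
    next
      case False
      then show ?thesis using cochains_zero[OF n x] cochains_zero[OF n y] by simp
    qed
  qed
qed

lemma R_double_zero: "(a::R) = - a \<Longrightarrow> a = 0"
proof -
  assume h: "a = - a"
  show "a = 0"
  proof (rule poly_mapping_eqI)
    fix k
    have "Poly_Mapping.lookup a k = Poly_Mapping.lookup (- a) k" using arg_cong[OF h, of "\<lambda>b. Poly_Mapping.lookup b k"] by (simp only:)
    also have "\<dots> = - (Poly_Mapping.lookup a k :: rat)" by (simp add: lookup_uminus)
    finally show "Poly_Mapping.lookup a k = Poly_Mapping.lookup (0::R) k" by simp
  qed
qed

lemma beta_image:
  assumes n: "2 \<le> n"
  shows "beta n ` cochains {1..n} (B_mat n) = Ihat n"
proof
  have n1: "1 \<le> n" using n by simp
  show "beta n ` cochains {1..n} (B_mat n) \<subseteq> Ihat n"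
  proof
    fix z assume "z \<in> beta n ` cochains {1..n} (B_mat n)"
    then obtain x where z: "z = beta n x" by auto
    have ch: "z \<in> chat n" unfolding chat_def z using beta_eval[OF n] by (auto simp: condD_def)
    have "sigma n z \<Delta> = z \<Delta>" for \<Delta>
    proof (cases "\<Delta> \<subseteq> St n")
      case False
      then show ?thesis using sigma_out[OF False n1] ch by (simp add: chat_def)
    next
      case True
      show ?thesis
      proof -
        have "(1 \<in> \<Delta>) \<noteq> (2 \<in> \<Delta>) \<Longrightarrow> z (swap12 \<Delta>) = z \<Delta>"
          unfolding z beta_eval[OF n] condD_def
          using swap12_sub[OF n1 True] fB_swap12 one_swap two_swap True by auto
        moreover have "1 \<in> \<Delta> \<and> 2 \<in> \<Delta> \<Longrightarrow> z \<Delta> = 0"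
          unfolding z beta_eval[OF n] condD_def by simp
        ultimately show ?thesis using sigma_eval[OF n1 True, of z] by auto
      qed
    qed
    then show "z \<in> Ihat n" using ch by (auto simp: Ihat_def)
  qed
next
  have n1: "1 \<le> n" using n by simp
  show "Ihat n \<subseteq> beta n ` cochains {1..n} (B_mat n)"
  proof
    fix y assume y: "y \<in> Ihat n"
    then have ych: "\<And>\<Delta>. \<not> \<Delta> \<subseteq> St n \<Longrightarrow> y \<Delta> = 0" and ys: "sigma n y = y"
      by (auto simp: Ihat_def chat_def)
    define x where "x \<Gamma> = (if \<Gamma> \<subseteq> {1..n} then y (ph1 ` \<Gamma>) else 0)" for \<Gamma>
    have xc: "x \<in> cochains {1..n} (B_mat n)"
      unfolding cochains_def x_def using B_fin_type[OF n] by auto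
    have "beta n x \<Delta> = y \<Delta>" for \<Delta>
    proof (cases "condD n \<Delta>")
      case True
      have D: "\<Delta> \<subseteq> St n" and nb: "\<not> (1 \<in> \<Delta> \<and> 2 \<in> \<Delta>)" using True by (auto simp: condD_def)
      have G0: "fB ` \<Delta> \<subseteq> {1..n}" using fB_img_range[OF n D] .
      have "beta n x \<Delta> = y (ph1 ` fB ` \<Delta>)" using beta_eval[OF n] True G0 by (simp add: x_def)
      also have "\<dots> = y \<Delta>"
      proof (cases "2 \<in> \<Delta>")
        case False
        then show ?thesis using ph1_fB_img[OF D] by simp
      next
        case True
        have one: "1 \<notin> \<Delta>" using nb True by simp
        have sD: "swap12 \<Delta> \<subseteq> St n" using swap12_sub[OF n1 D] .
        have "2 \<notin> swap12 \<Delta>" using two_swap one by simp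
        then have "ph1 ` fB ` \<Delta> = swap12 \<Delta>" using ph1_fB_img[OF sD] fB_swap12 by metis
        moreover have "y \<Delta> = y (swap12 \<Delta>)"
          using sigma_eval[OF n1 D, of y] ys one True by simp
        ultimately show ?thesis by simp
      qed
      finally show ?thesis .
    next
      case False
      then have "beta n x \<Delta> = 0" using beta_eval[OF n] by simp
      moreover have "y \<Delta> = 0"
      proof (cases "\<Delta> \<subseteq> St n")
        case True
        then have b: "1 \<in> \<Delta> \<and> 2 \<in> \<Delta>" using False by (simp add: condD_def)
        have "y \<Delta> = - y \<Delta>" using sigma_eval[OF n1 True, of y] ys b by simp
        then show ?thesis by (rule R_double_zero)
      qed (rule ych)
      ultimately show ?thesis by simp
    qed
    then have "beta n x = y" by auto
    then show "y \<in> beta n ` cochains {1..n} (B_mat n)" using xc by blast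
  qed
qed

theorem mainTheorem4:
  fixes n :: nat
  assumes "2 \<le> n"
  shows "(\<forall>x\<in>cochains {1..n} (B_mat n).
            beta n (salvetti_d {1..n} (B_mat n) (eta_B n) x) = dhat n (beta n x))
       \<and> inj_on (beta n) (cochains {1..n} (B_mat n))
       \<and> beta n ` cochains {1..n} (B_mat n) = Ihat n"
  using chain_map[OF assms] beta_inj[OF assms] beta_image[OF assms] by auto


end
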